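(* Let $d \in \mathbf{N}=\{1,2,\dots\}$. Then the following two statements hold. (i) For every $N \in \mathbf{N}$: a measure $\mu$ maximizes $E_\infty$ over $\mathcal{P}_N^{=}(\mathbf{S}^d)$ if and only if there exist an orthonormal basis $v_1,\dots,v_{d+1}$ of $\mathbf{R}^{d+1}$ and points $x_1,\dots,x_N \in \mathbf{S}^d$ such that $\mu = \frac{1}{N}\sum_{i=1}^N \delta_{x_i}$ and $x_i \in \{v_j,-v_j\}$ whenever $i \equiv j \pmod{d+1}$. (ii) A measure $\mu$ maximizes $E_\infty$ over $\mathcal{P}_{\mathrm{fin}}(\mathbf{S}^d)$ if and only if there exists an orthonormal basis $v_1,\dots,v_{d+1}$ of $\mathbf{R}^{d+1}$ such that $\mu = \sum_{i=1}^{d+1}(a_i\delta_{v_i} + b_i\delta_{-v_i})$ with $a_i,b_i \ge 0$ and $a_i+b_i = \frac{1}{d+1}$ for all $i=1,\dots,d+1$.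
   Context: $\mathbf{S}^d=\{x\in\mathbf{R}^{d+1}: |x|=1\}$. Define $\Lambda^\infty:\mathbf{S}^d\times\mathbf{S}^d\to\{0,1\}$ by $\Lambda^\infty(x,y)=1$ if $x\cdot y=0$ and $\Lambda^\infty(x,y)=0$ otherwise. For a finite nonnegative Borel measure $\mu$ on $\mathbf{S}^d$, $E_\infty(\mu)=\frac12\iint \Lambda^\infty(x,y)\,d\mu(x)\,d\mu(y)$. $\delta_x$ denotes the Dirac probability measure at $x$. $\mathcal{P}_N^{=}(\mathbf{S}^d)$ is the set of probability measures of the form $\frac1N\sum_{i=1}^N\delta_{x_i}$ with $x_i\in\mathbf{S}^d$ (not necessarily distinct). $\mathcal{P}_{\mathrm{fin}}(\mathbf{S}^d)$ is the set of Borel probability measures on $\mathbf{S}^d$ with finite support. *)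

theory Defs
  imports "HOL-Analysis.Analysis" "HOL-Probability.Probability"
begin

text \<open>Points of R^(d+1) are vectors of type real^'n with CARD('n) = d+1.
  Finitely supported probability measures on the sphere are represented as pmfs
  (discrete probability measures) whose (finite) support lies on the unit sphere.\<close>

definition Lambda_inf :: "real^'n \<Rightarrow> real^'n \<Rightarrow> real" where
  "Lambda_inf x y = (if x \<bullet> y = 0 then 1 else 0)"

definition E_inf :: "(real^'n) pmf \<Rightarrow> real" where
  "E_inf \<mu> = 1/2 * measure_pmf.expectation \<mu>
      (\<lambda>x. measure_pmf.expectation \<mu> (\<lambda>y. Lambda_inf x y))"

definition is_empirical :: "(real^'n) pmf \<Rightarrow> nat \<Rightarrow> (nat \<Rightarrow> real^'n) \<Rightarrow> bool" where
  "is_empirical \<mu> N x \<longleftrightarrow>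
     (\<forall>A. measure (measure_pmf \<mu>) A = (1 / real N) * (\<Sum>i<N. indicator A (x i)))"

definition P_N_eq :: "nat \<Rightarrow> (real^'n) pmf set" where
  "P_N_eq N = {\<mu>. \<exists>x. (\<forall>i<N. x i \<in> sphere 0 1) \<and> is_empirical \<mu> N x}"

definition P_fin :: "(real^'n) pmf set" where
  "P_fin = {\<mu>. finite (set_pmf \<mu>) \<and> set_pmf \<mu> \<subseteq> sphere 0 1}"

definition maximizes_on :: "('a \<Rightarrow> real) \<Rightarrow> 'a set \<Rightarrow> 'a \<Rightarrow> bool" where
  "maximizes_on E S \<mu> \<longleftrightarrow> \<mu> \<in> S \<and> (\<forall>\<nu>\<in>S. E \<nu> \<le> E \<mu>)"

text \<open>v 0, ..., v (CARD('n) - 1) is an orthonormal basis of real^'n (0-based indexing).\<close>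
definition orthonormal_basis :: "(nat \<Rightarrow> real^'n) \<Rightarrow> bool" where
  "orthonormal_basis v \<longleftrightarrow>
     (\<forall>j<CARD('n). \<forall>k<CARD('n). v j \<bullet> v k = (if j = k then 1 else 0)) \<and>
     span (v ` {..<CARD('n)}) = UNIV"

end

theory Submission
  imports Defs
begin

lemma ob_of_set:
  fixes R :: "(real^'n) set" and v :: "nat \<Rightarrow> real^'n"
  assumes bij: "bij_betw v {..<CARD('n)} R"
    and orth: "\<And>a b. a \<in> R \<Longrightarrow> b \<in> R \<Longrightarrow> a \<noteq> b \<Longrightarrow> a \<bullet> b = 0"
    and unit: "\<And>a. a \<in> R \<Longrightarrow> norm a = 1"
  shows "orthonormal_basis v"
proof -
  have cardR: "card R = CARD('n)" using bij bij_betw_same_card by fastforce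
  have "pairwise orthogonal R" using orth by (auto simp: pairwise_def orthogonal_def)
  moreover have "0 \<notin> R" using unit by fastforce
  ultimately have ind: "independent R" by (rule pairwise_orthogonal_independent)
  have "dim R = DIM(real^'n)" using dim_eq_card_independent[OF ind] cardR by simp
  then have sp: "span R = UNIV" using dim_eq_full by blast
  have vR: "v ` {..<CARD('n)} = R" using bij by (simp add: bij_betw_def)
  have inj: "inj_on v {..<CARD('n)}" using bij by (simp add: bij_betw_def)
  show ?thesis unfolding orthonormal_basis_def
  proof (intro conjI allI impI)
    fix j k assume j: "j < CARD('n)" and k: "k < CARD('n)"
    show "v j \<bullet> v k = (if j = k then 1 else 0)"
    proof (cases "j = k")
      case True
      have "norm (v j) = 1" using unit vR j by blast
      then show ?thesis using True by (simp add: dot_square_norm)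
    next
      case False
      then have "v j \<noteq> v k" using inj j k by (auto simp: inj_on_def)
      then show ?thesis using False orth vR j k by auto
    qed
  next
    show "span (v ` {..<CARD('n)}) = UNIV" using vR sp by simp
  qed
qed

lemma extend_orth:
  fixes S :: "(real^'n) set"
  assumes fin: "finite S"
    and orth: "\<And>a b. a \<in> S \<Longrightarrow> b \<in> S \<Longrightarrow> a \<noteq> b \<Longrightarrow> a \<bullet> b = 0"
    and unit: "\<And>a. a \<in> S \<Longrightarrow> norm a = 1"
  shows "\<exists>v. orthonormal_basis v \<and> S \<subseteq> v ` {..<CARD('n)}"
proof -
  define W where "W = {y \<in> UNIV. \<forall>x \<in> span S. orthogonal x y}"
  have sW: "subspace W" unfolding W_def using subspace_orthogonal_to_vectors[of "span S"] by simp
  obtain B where BW: "B \<subseteq> W" and oB: "pairwise orthogonal B"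
    and uB: "\<And>x. x \<in> B \<Longrightarrow> norm x = 1" and iB: "independent B" and cB: "card B = dim W"
    using orthonormal_basis_subspace[OF sW] by metis
  have fB: "finite B" using iB independent_imp_finite by blast
  have "pairwise orthogonal S" using orth by (auto simp: pairwise_def orthogonal_def)
  moreover have "0 \<notin> S" using unit by fastforce
  ultimately have iS: "independent S" by (rule pairwise_orthogonal_independent)
  have "dim W + dim (span S) = dim (UNIV :: (real^'n) set)"
    unfolding W_def by (rule dim_subspace_orthogonal_to_vectors) auto
  then have dimsum: "card B + card S = CARD('n)"
    using cB dim_eq_card_independent[OF iS] by (simp add: dim_span)
  have disj: "B \<inter> S = {}"
  proof (rule ccontr)
    assume "B \<inter> S \<noteq> {}"
    then obtain b where b: "b \<in> B" "b \<in> S" by blast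
    then have "orthogonal b b" using BW span_base[of b S] unfolding W_def by blast
    then have "b = 0" by (simp add: orthogonal_def)
    then show False using uB[OF b(1)] by simp
  qed
  define R where "R = S \<union> B"
  have fR: "finite R" using fin fB R_def by simp
  have cR: "card R = CARD('n)" unfolding R_def using card_Un_disjoint[OF fin fB] disj dimsum by (simp add: Int_commute)
  obtain v where bv: "bij_betw v {0..<card R} R" using ex_bij_betw_nat_finite[OF fR] by blast
  have bv': "bij_betw v {..<CARD('n)} R" using bv cR by (simp add: atLeast0LessThan)
  have ob: "orthonormal_basis v"
  proof (rule ob_of_set[OF bv'])
    fix a b assume a: "a \<in> R" and b: "b \<in> R" and ab: "a \<noteq> b"
    show "a \<bullet> b = 0"
    proof -
      { assume "a \<in> S" "b \<in> S" then have ?thesis using orth ab by blast }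
      moreover
      { assume "a \<in> B" "b \<in> B" then have ?thesis using oB ab by (auto simp: pairwise_def orthogonal_def) }
      moreover
      { assume "a \<in> S" "b \<in> B" then have ?thesis using BW span_base[of a S] unfolding W_def orthogonal_def by blast }
      moreover
      { assume "a \<in> B" "b \<in> S" then have "b \<bullet> a = 0" using BW span_base[of b S] unfolding W_def orthogonal_def by blast
        then have ?thesis by (simp add: inner_commute) }
      ultimately show ?thesis using a b unfolding R_def by blast
    qed
  next
    fix a assume "a \<in> R" then show "norm a = 1" using unit uB R_def by blast
  qed
  moreover have "S \<subseteq> v ` {..<CARD('n)}" using bv' unfolding bij_betw_def R_def by auto
  ultimately show ?thesis by blast
qed

lemma ob_inner:
  assumes "orthonormal_basis (v :: nat \<Rightarrow> real^'n)" "j < CARD('n)" "k < CARD('n)"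
  shows "v j \<bullet> v k = (if j = k then 1 else 0)"
  using assms unfolding orthonormal_basis_def by blast

lemma ob_norm:
  assumes "orthonormal_basis (v :: nat \<Rightarrow> real^'n)" "k < CARD('n)"
  shows "norm (v k) = 1"
  using ob_inner[OF assms(1,2,2)] by (simp add: norm_eq_sqrt_inner)

lemma ob_inj:
  assumes "orthonormal_basis (v :: nat \<Rightarrow> real^'n)"
  shows "inj_on v {..<CARD('n)}"
proof
  fix j k assume j: "j \<in> {..<CARD('n)}" and k: "k \<in> {..<CARD('n)}" and e: "v j = v k"
  have "v j \<bullet> v k = 1" using ob_inner[OF assms, of j j] e j by simp
  then show "j = k" using ob_inner[OF assms, of j k] j k by (auto split: if_splits)
qed

lemma ob_orth_zero:
  assumes ob: "orthonormal_basis (v :: nat \<Rightarrow> real^'n)"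
    and h: "\<And>l. l < CARD('n) \<Longrightarrow> y \<bullet> v l = 0"
  shows "y = 0"
proof -
  have "y \<in> span (v ` {..<CARD('n)})" using ob unfolding orthonormal_basis_def by simp
  moreover have "\<And>z. z \<in> v ` {..<CARD('n)} \<Longrightarrow> orthogonal y z" using h by (auto simp: orthogonal_def)
  ultimately have "orthogonal y y" by (rule orthogonal_to_span)
  then show ?thesis by (simp add: orthogonal_def)
qed

lemma ob_nonzero:
  assumes ob: "orthonormal_basis (v :: nat \<Rightarrow> real^'n)" and "x \<noteq> 0"
  shows "\<exists>k<CARD('n). x \<bullet> v k \<noteq> 0"
  using ob_orth_zero[OF ob, of x] assms(2) by blast

lemma ob_line:
  assumes ob: "orthonormal_basis (v :: nat \<Rightarrow> real^'n)" and k: "k < CARD('n)"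
    and h: "\<And>l. l < CARD('n) \<Longrightarrow> l \<noteq> k \<Longrightarrow> x \<bullet> v l = 0" and nx: "norm x = 1"
  shows "x = v k \<or> x = - v k"
proof -
  define c where "c = x \<bullet> v k"
  have "x - c *\<^sub>R v k = 0"
  proof (rule ob_orth_zero[OF ob])
    fix l assume l: "l < CARD('n)"
    show "(x - c *\<^sub>R v k) \<bullet> v l = 0"
      using h[OF l] ob_inner[OF ob k l] unfolding c_def
      by (cases "l = k") (auto simp: inner_diff_left)
  qed
  then have xe: "x = c *\<^sub>R v k" by simp
  then have "\<bar>c\<bar> = 1" using nx ob_norm[OF ob k] by simp
  then show ?thesis using xe by (cases "c \<ge> 0") auto
qed

lemma unit_sq:
  fixes s u :: "real^'n"
  assumes "norm s = 1" "norm u = 1" "(s \<bullet> u)\<^sup>2 = 1"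
  shows "s = u \<or> s = - u"
proof -
  define c where "c = s \<bullet> u"
  have ss: "s \<bullet> s = 1" "u \<bullet> u = 1" using assms by (simp_all add: dot_square_norm)
  have "(s - c *\<^sub>R u) \<bullet> (s - c *\<^sub>R u) = 0"
    using ss assms(3) unfolding c_def
    by (simp add: inner_diff_left inner_diff_right inner_commute power2_eq_square)
  then have "s = c *\<^sub>R u" by simp
  moreover have "c = 1 \<or> c = -1" using assms(3) unfolding c_def
    by (metis power2_eq_1_iff)
  ultimately show ?thesis by auto
qed

lemma max_orth:
  fixes x :: "'a \<Rightarrow> real^'n"
  assumes fin: "finite I" and nz: "\<And>i. i \<in> I \<Longrightarrow> x i \<noteq> 0"
  obtains J where "J \<subseteq> I" "\<And>a b. a \<in> J \<Longrightarrow> b \<in> J \<Longrightarrow> a \<noteq> b \<Longrightarrow> x a \<bullet> x b = 0"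
    "\<And>i. i \<in> I \<Longrightarrow> \<exists>j\<in>J. x i \<bullet> x j \<noteq> 0"
proof -
  define F where "F = {J. J \<subseteq> I \<and> (\<forall>a\<in>J. \<forall>b\<in>J. a \<noteq> b \<longrightarrow> x a \<bullet> x b = 0)}"
  have "finite F" unfolding F_def using fin by (auto intro: finite_subset[of _ "Pow I"])
  moreover have "{} \<in> F" unfolding F_def by auto
  ultimately obtain m where m: "m \<in> F" and mx: "\<forall>b\<in>F. m \<le> b \<longrightarrow> m = b"
    using finite_has_maximal[of F] by blast
  show ?thesis
  proof (rule that)
    show "m \<subseteq> I" using m F_def by auto
    show "\<And>a b. a \<in> m \<Longrightarrow> b \<in> m \<Longrightarrow> a \<noteq> b \<Longrightarrow> x a \<bullet> x b = 0" using m F_def by auto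
    fix i assume i: "i \<in> I"
    show "\<exists>j\<in>m. x i \<bullet> x j \<noteq> 0"
    proof (rule ccontr)
      assume "\<not> ?thesis"
      then have h: "\<forall>j\<in>m. x i \<bullet> x j = 0" by blast
      have "insert i m \<in> F" using m h i unfolding F_def by (auto simp: inner_commute)
      then have "m = insert i m" using mx by blast
      then have "i \<in> m" by blast
      then show False using h nz[OF i] by (metis inner_eq_zero_iff)
    qed
  qed
qed

lemma orth_card:
  fixes x :: "'a \<Rightarrow> real^'n"
  assumes fin: "finite J" and orth: "\<And>a b. a \<in> J \<Longrightarrow> b \<in> J \<Longrightarrow> a \<noteq> b \<Longrightarrow> x a \<bullet> x b = 0"
    and nz: "\<And>i. i \<in> J \<Longrightarrow> x i \<noteq> 0"
  shows "card J \<le> CARD('n)"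
proof -
  have inj: "inj_on x J"
  proof
    fix a b assume a: "a \<in> J" and b: "b \<in> J" and e: "x a = x b"
    show "a = b"
    proof (rule ccontr)
      assume "a \<noteq> b"
      then have "x a \<bullet> x a = 0" using orth a b e by metis
      then show False using nz a by simp
    qed
  qed
  have "pairwise orthogonal (x ` J)" using orth by (auto simp: pairwise_def orthogonal_def)
  moreover have "0 \<notin> x ` J" using nz by force
  ultimately have "independent (x ` J)" by (rule pairwise_orthogonal_independent)
  then have "card (x ` J) \<le> DIM(real^'n)" using independent_bound by blast
  then show ?thesis using card_image[OF inj] by simp
qed

definition dg :: "('a \<Rightarrow> real^'n) \<Rightarrow> 'a set \<Rightarrow> 'a \<Rightarrow> nat" where
  "dg x I i = card {j \<in> I. x i \<bullet> x j \<noteq> 0}"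

definition PP :: "('a \<Rightarrow> real^'n) \<Rightarrow> 'a set \<Rightarrow> nat" where
  "PP x I = (\<Sum>i\<in>I. dg x I i)"

fun TT :: "nat \<Rightarrow> nat \<Rightarrow> nat" where
  "TT n 0 = 0"
| "TT n (Suc m) = TT n m + 2 * (m div n) + 1"

lemma card_filter_sum: "finite A \<Longrightarrow> card {j \<in> A. P j} = (\<Sum>j\<in>A. if P j then 1 else 0)"
  by (simp add: sum.If_cases Int_def)

lemma PP_remove:
  fixes x :: "'a \<Rightarrow> real^'n"
  assumes fin: "finite I" and i: "i \<in> I" and nz: "x i \<noteq> 0"
  shows "PP x I + 1 = PP x (I - {i}) + 2 * dg x I i"
proof -
  let ?I = "I - {i}"
  have fI: "finite ?I" using fin by simp
  have d1: "dg x I i = Suc (card {j \<in> ?I. x i \<bullet> x j \<noteq> 0})"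
  proof -
    have "{j \<in> I. x i \<bullet> x j \<noteq> 0} = insert i {j \<in> ?I. x i \<bullet> x j \<noteq> 0}" using i nz by auto
    then show ?thesis unfolding dg_def using fI by simp
  qed
  have d2: "dg x I j = dg x ?I j + (if x i \<bullet> x j \<noteq> 0 then 1 else 0)" if j: "j \<in> ?I" for j
  proof (cases "x i \<bullet> x j \<noteq> 0")
    case True
    then have "{k \<in> I. x j \<bullet> x k \<noteq> 0} = insert i {k \<in> ?I. x j \<bullet> x k \<noteq> 0}" using i by (auto simp: inner_commute)
    then show ?thesis unfolding dg_def using fI True by simp
  next
    case False
    then have "{k \<in> I. x j \<bullet> x k \<noteq> 0} = {k \<in> ?I. x j \<bullet> x k \<noteq> 0}" using i by (auto simp: inner_commute)
    then show ?thesis unfolding dg_def using False by simp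
  qed
  have "PP x I = dg x I i + (\<Sum>j\<in>?I. dg x I j)" unfolding PP_def using sum.remove[OF fin i] by simp
  also have "(\<Sum>j\<in>?I. dg x I j) = (\<Sum>j\<in>?I. dg x ?I j) + (\<Sum>j\<in>?I. if x i \<bullet> x j \<noteq> 0 then 1 else 0)"
    using d2 by (simp add: sum.distrib)
  also have "(\<Sum>j\<in>?I. if x i \<bullet> x j \<noteq> 0 then 1 else 0) = card {j \<in> ?I. x i \<bullet> x j \<noteq> 0}"
    using card_filter_sum[OF fI] by simp
  finally show ?thesis using d1 unfolding PP_def by simp
qed

lemma key_vertex:
  fixes x :: "'a \<Rightarrow> real^'n"
  assumes fin: "finite I" and ne: "I \<noteq> {}" and nz: "\<And>i. i \<in> I \<Longrightarrow> x i \<noteq> 0"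
  shows "\<exists>i\<in>I. card I \<le> CARD('n) * dg x I i"
proof (rule ccontr)
  assume "\<not> ?thesis"
  then have lt: "\<And>i. i \<in> I \<Longrightarrow> CARD('n) * dg x I i < card I" by force
  obtain J where JI: "J \<subseteq> I" and oJ: "\<And>a b. a \<in> J \<Longrightarrow> b \<in> J \<Longrightarrow> a \<noteq> b \<Longrightarrow> x a \<bullet> x b = 0"
    and cov: "\<And>i. i \<in> I \<Longrightarrow> \<exists>j\<in>J. x i \<bullet> x j \<noteq> 0"
    using max_orth[OF fin, of x] nz by blast
  have fJ: "finite J" using JI fin finite_subset by blast
  have nzJ: "\<And>i. i \<in> J \<Longrightarrow> x i \<noteq> 0" using JI nz by blast
  have cJ: "card J \<le> CARD('n)" by (rule orth_card[of J x, OF fJ]) (use oJ nzJ in auto)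
  have JN: "J \<noteq> {}" using ne cov by blast
  have sub: "I \<subseteq> (\<Union>j\<in>J. {i \<in> I. x j \<bullet> x i \<noteq> 0})"
  proof
    fix i assume i: "i \<in> I"
    then obtain j where "j \<in> J" "x i \<bullet> x j \<noteq> 0" using cov by blast
    then show "i \<in> (\<Union>j\<in>J. {i \<in> I. x j \<bullet> x i \<noteq> 0})" using i inner_commute[of "x i" "x j"] by auto
  qed
  have "finite (\<Union>j\<in>J. {i \<in> I. x j \<bullet> x i \<noteq> 0})" by (rule finite_subset[of _ I]) (use fin in auto)
  then have "card I \<le> card (\<Union>j\<in>J. {i \<in> I. x j \<bullet> x i \<noteq> 0})"
    using sub card_mono by blast
  also have "\<dots> \<le> (\<Sum>j\<in>J. card {i \<in> I. x j \<bullet> x i \<noteq> 0})" by (rule card_UN_le[OF fJ])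
  also have "\<dots> = (\<Sum>j\<in>J. dg x I j)" unfolding dg_def by simp
  finally have c1: "card I \<le> (\<Sum>j\<in>J. dg x I j)" .
  have "CARD('n) * card I \<le> (\<Sum>j\<in>J. CARD('n) * dg x I j)"
    using c1 by (simp add: sum_distrib_left[symmetric])
  also have "\<dots> < (\<Sum>j\<in>J. card I)"
    by (rule sum_strict_mono[OF fJ JN]) (use lt JI in blast)
  also have "\<dots> = card J * card I" by simp
  also have "\<dots> \<le> CARD('n) * card I" using cJ by simp
  finally show False by simp
qed

lemma lemmaA:
  fixes x :: "'a \<Rightarrow> real^'n"
  assumes "finite I" "\<And>i. i \<in> I \<Longrightarrow> x i \<noteq> 0"
  shows "TT CARD('n) (card I) \<le> PP x I"
  using assms
proof (induction "card I" arbitrary: I)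
  case 0
  then have "I = {}" by simp
  then show ?case by (simp add: PP_def)
next
  case (Suc m)
  have fin: "finite I" by (rule Suc.prems(1))
  have nz: "\<And>i. i \<in> I \<Longrightarrow> x i \<noteq> 0" by (rule Suc.prems(2))
  have cI0: "card I = Suc m" using Suc.hyps(2) by simp
  then have ne: "I \<noteq> {}" by auto
  obtain i where i: "i \<in> I" and ki: "card I \<le> CARD('n) * dg x I i"
  proof -
    have "\<exists>i\<in>I. card I \<le> CARD('n) * dg x I i" by (rule key_vertex[OF fin ne]) (rule nz)
    then show ?thesis using that by blast
  qed
  have cI: "m = card (I - {i})" using card_Diff_singleton[OF i] cI0 by (simp only: diff_Suc_1)
  have fin': "finite (I - {i})" using fin by blast
  have nz': "\<And>j. j \<in> I - {i} \<Longrightarrow> x j \<noteq> 0" using nz by blast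
  have IH: "TT CARD('n) (card (I - {i})) \<le> PP x (I - {i})"
    by (rule Suc.hyps(1)[OF cI fin' nz'])
  have rem: "PP x I + 1 = PP x (I - {i}) + 2 * dg x I i"
    using PP_remove[OF fin i, of x, OF nz[OF i]] .
  have dge: "m div CARD('n) + 1 \<le> dg x I i"
  proof (rule ccontr)
    assume "\<not> ?thesis"
    then have "dg x I i \<le> m div CARD('n)" by simp
    then have "CARD('n) * dg x I i \<le> CARD('n) * (m div CARD('n))" by simp
    also have "\<dots> \<le> m" by simp
    finally show False using ki cI0 by simp
  qed
  have "TT CARD('n) (card I) = TT CARD('n) m + 2 * (m div CARD('n)) + 1"
    using cI0 by simp
  moreover have "TT CARD('n) m \<le> PP x (I - {i})" using IH cI by simp
  ultimately show ?case using rem dge by linarith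
qed

lemma TT_small: "m \<le> n \<Longrightarrow> TT n m = m"
  by (induction m) auto

lemma balanced_min:
  fixes g :: "'a \<Rightarrow> nat"
  assumes fin: "finite I" and gI: "\<And>i. i \<in> I \<Longrightarrow> g i < n" and n: "n \<ge> 1"
    and bal: "\<And>k l. k < n \<Longrightarrow> l < n \<Longrightarrow> card {i \<in> I. g i = k} \<le> card {i \<in> I. g i = l} + 1"
    and k: "k < n"
  shows "card I div n \<le> card {i \<in> I. g i = k}"
proof (rule ccontr)
  let ?c = "\<lambda>l. card {i \<in> I. g i = l}"
  assume "\<not> ?thesis"
  then have lt: "?c k < card I div n" by simp
  have sumc: "(\<Sum>l<n. ?c l) = card I"
    using sum.group[OF fin, of "{..<n}" g "\<lambda>_. (1::nat)"] gI by auto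
  have "(\<Sum>l<n. ?c l) < (\<Sum>l<n. ?c k + 1)"
    by (rule sum_strict_mono_ex1) (use bal k in auto)
  also have "\<dots> = n * (?c k + 1)" by simp
  also have "\<dots> \<le> n * (card I div n)" using lt by (intro mult_le_mono2) simp
  also have "\<dots> \<le> card I" by simp
  finally show False using sumc by simp
qed

lemma pm_inner_nz:
  assumes ob: "orthonormal_basis (v :: nat \<Rightarrow> real^'n)" and a: "a < CARD('n)" and b: "b < CARD('n)"
    and x: "x = v a \<or> x = - v a" and y: "y = v b \<or> y = - v b"
  shows "x \<bullet> y \<noteq> 0 \<longleftrightarrow> a = b"
  using ob_inner[OF ob a b] x y by (auto split: if_splits)

lemma orth_family_basis:
  fixes x :: "'a \<Rightarrow> real^'n"
  assumes fin: "finite I" and unit: "\<forall>i\<in>I. norm (x i) = 1"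
    and orth: "\<forall>i\<in>I. \<forall>j\<in>I. i \<noteq> j \<longrightarrow> x i \<bullet> x j = 0"
  shows "\<exists>v g. orthonormal_basis v \<and> (\<forall>i\<in>I. g i < CARD('n) \<and> x i = v (g i)) \<and> inj_on g I"
proof -
  have inj: "inj_on x I"
  proof
    fix i j assume i: "i \<in> I" and j: "j \<in> I" and e: "x i = x j"
    show "i = j"
    proof (rule ccontr)
      assume "i \<noteq> j"
      then have "x i \<bullet> x j = 0" using orth i j by blast
      then have "x i \<bullet> x i = 0" using e by simp
      moreover have "norm (x i) = 1" using unit i by blast
      ultimately show False by simp
    qed
  qed
  have "\<exists>v. orthonormal_basis v \<and> x ` I \<subseteq> v ` {..<CARD('n)}"
  proof (rule extend_orth)
    show "finite (x ` I)" using fin by simp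
  next
    fix a b assume a: "a \<in> x ` I" and b: "b \<in> x ` I" and ab: "a \<noteq> b"
    obtain i where i: "i \<in> I" "a = x i" using a by blast
    obtain j where j: "j \<in> I" "b = x j" using b by blast
    have "i \<noteq> j" using ab i j by blast
    then show "a \<bullet> b = 0" using orth i j by blast
  next
    fix a assume "a \<in> x ` I" then show "norm a = 1" using unit by blast
  qed
  then obtain v where ob: "orthonormal_basis v" and sub: "x ` I \<subseteq> v ` {..<CARD('n)}" by blast
  define g where "g i = inv_into {..<CARD('n)} v (x i)" for i
  have g1: "g i < CARD('n)" and g2: "v (g i) = x i" if "i \<in> I" for i
  proof -
    have xi: "x i \<in> v ` {..<CARD('n)}" using sub that by blast
    show "g i < CARD('n)" using inv_into_into[OF xi] unfolding g_def by simp
    show "v (g i) = x i" using f_inv_into_f[OF xi] unfolding g_def by simp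
  qed
  have "inj_on g I"
  proof
    fix i j assume "i \<in> I" "j \<in> I" "g i = g j"
    then have "x i = x j" using g2[of i] g2[of j] by simp
    then show "i = j" using inj \<open>i \<in> I\<close> \<open>j \<in> I\<close> by (auto simp: inj_on_def)
  qed
  then show ?thesis using ob g1 g2 by (intro exI[of _ v] exI[of _ g] conjI ballI) auto
qed

lemma lemmaB_small:
  fixes x :: "'a \<Rightarrow> real^'n"
  assumes fin: "finite I" and unit: "\<forall>i\<in>I. norm (x i) = 1" and small: "card I \<le> CARD('n)"
    and eq: "PP x I = TT CARD('n) (card I)"
  shows "\<exists>v g. orthonormal_basis v \<and> (\<forall>i\<in>I. g i < CARD('n) \<and> (x i = v (g i) \<or> x i = - v (g i))) \<and>
     (\<forall>k<CARD('n). \<forall>l<CARD('n). card {i\<in>I. g i = k} \<le> card {i\<in>I. g i = l} + 1)"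
proof -
  have PPc: "(\<Sum>i\<in>I. dg x I i) = (\<Sum>i\<in>I. 1)" using eq TT_small[OF small] unfolding PP_def by simp
  have ge1: "1 \<le> dg x I i" if i: "i \<in> I" for i
  proof -
    have "i \<in> {j \<in> I. x i \<bullet> x j \<noteq> 0}" using i unit by auto
    moreover have "finite {j \<in> I. x i \<bullet> x j \<noteq> 0}" using fin by simp
    ultimately have "0 < card {j \<in> I. x i \<bullet> x j \<noteq> 0}" using card_gt_0_iff by blast
    then show ?thesis unfolding dg_def by simp
  qed
  have eq1: "dg x I i = 1" if i: "i \<in> I" for i
  proof (rule ccontr)
    assume "dg x I i \<noteq> 1"
    then have lt: "1 < dg x I i" using ge1[OF i] by linarith
    have "(\<Sum>i\<in>I. (1::nat)) < (\<Sum>i\<in>I. dg x I i)"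
      by (rule sum_strict_mono_ex1[OF fin]) (use ge1 lt i in auto)
    then show False using PPc by simp
  qed
  have orth: "\<forall>i\<in>I. \<forall>j\<in>I. i \<noteq> j \<longrightarrow> x i \<bullet> x j = 0"
  proof (intro ballI impI)
    fix i j assume i: "i \<in> I" and j: "j \<in> I" and ij: "i \<noteq> j"
    show "x i \<bullet> x j = 0"
    proof (rule ccontr)
      assume "x i \<bullet> x j \<noteq> 0"
      then have "{i, j} \<subseteq> {k \<in> I. x i \<bullet> x k \<noteq> 0}" using i j unit by auto
      then have "card {i, j} \<le> dg x I i" unfolding dg_def by (rule card_mono[rotated]) (use fin in simp)
      then show False using eq1[OF i] ij by simp
    qed
  qed
  obtain v g where ob: "orthonormal_basis v" and g: "\<forall>i\<in>I. g i < CARD('n) \<and> x i = v (g i)"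
    and ig: "inj_on g I"
    using orth_family_basis[OF fin unit orth] by blast
  have "card {i\<in>I. g i = k} \<le> 1" for k
  proof -
    have "finite {i\<in>I. g i = k}" using fin by simp
    moreover have "\<forall>a1\<in>{i\<in>I. g i = k}. \<forall>a2\<in>{i\<in>I. g i = k}. a1 = a2" using ig by (auto simp: inj_on_def)
    ultimately have "card {i\<in>I. g i = k} \<le> Suc 0" using card_le_Suc0_iff_eq by blast
    then show ?thesis by simp
  qed
  then have "\<forall>k<CARD('n). \<forall>l<CARD('n). card {i\<in>I. g i = k} \<le> card {i\<in>I. g i = l} + 1"
    by (meson le_add2 le_trans)
  then show ?thesis using ob g by (intro exI[of _ v] exI[of _ g]) blast
qed

lemma lemmaB:
  fixes x :: "'a \<Rightarrow> real^'n"
  assumes "finite I" "\<forall>i\<in>I. norm (x i) = 1" "PP x I = TT CARD('n) (card I)"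
  shows "\<exists>v g. orthonormal_basis v \<and> (\<forall>i\<in>I. g i < CARD('n) \<and> (x i = v (g i) \<or> x i = - v (g i))) \<and>
     (\<forall>k<CARD('n). \<forall>l<CARD('n). card {i\<in>I. g i = k} \<le> card {i\<in>I. g i = l} + 1)"
  using assms
proof (induction "card I" arbitrary: I)
  case 0
  then show ?case using lemmaB_small[of I x] by simp
next
  case (Suc m)
  have fin: "finite I" and unit: "\<forall>i\<in>I. norm (x i) = 1" and eq: "PP x I = TT CARD('n) (card I)"
    using Suc.prems by auto
  have cI0: "card I = Suc m" using Suc.hyps(2) by simp
  show ?case
  proof (cases "Suc m \<le> CARD('n)")
    case True
    then show ?thesis using lemmaB_small[OF fin unit _ eq] cI0 by simp
  next
    case False
    let ?n = "CARD('n)"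
    define q where "q = m div ?n"
    have q1: "1 \<le> q" using False unfolding q_def by (simp add: div_le_mono[of ?n m ?n, simplified])
    have nz: "\<And>i. i \<in> I \<Longrightarrow> x i \<noteq> 0" using unit by auto
    have ne: "I \<noteq> {}" using cI0 by auto
    obtain i where i: "i \<in> I" and ki: "card I \<le> ?n * dg x I i"
    proof -
      have "\<exists>i\<in>I. card I \<le> CARD('n) * dg x I i" by (rule key_vertex[OF fin ne]) (rule nz)
      then show ?thesis using that by blast
    qed
    define I' where "I' = I - {i}"
    have fin': "finite I'" using fin I'_def by simp
    have cI': "m = card I'" using card_Diff_singleton[OF i] cI0 unfolding I'_def by (simp only: diff_Suc_1)
    have unit': "\<forall>j\<in>I'. norm (x j) = 1" using unit I'_def by blast
    have nz': "\<And>j. j \<in> I' \<Longrightarrow> x j \<noteq> 0" using nz I'_def by blast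
    have A': "TT ?n (card I') \<le> PP x I'" by (rule lemmaA[of I' x, OF fin']) (rule nz')
    have rem: "PP x I + 1 = PP x I' + 2 * dg x I i"
      unfolding I'_def using PP_remove[OF fin i, of x, OF nz[OF i]] .
    have dge: "q + 1 \<le> dg x I i"
    proof (rule ccontr)
      assume "\<not> ?thesis"
      then have "dg x I i \<le> m div ?n" unfolding q_def by simp
      then have "?n * dg x I i \<le> ?n * (m div ?n)" by simp
      also have "\<dots> \<le> m" by simp
      finally show False using ki cI0 by simp
    qed
    have TTs: "TT ?n (card I) = TT ?n m + 2 * q + 1" using cI0 q_def by simp
    have A'': "TT ?n m \<le> PP x I'" using A' cI' by simp
    have e1: "PP x I' = TT ?n m" using rem dge TTs A'' eq by linarith
    have dgq: "dg x I i = q + 1" using rem dge TTs A'' eq by linarith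
    have eq': "PP x I' = TT ?n (card I')" using e1 cI' by simp
    obtain v g where ob: "orthonormal_basis v"
      and gx: "\<forall>j\<in>I'. g j < ?n \<and> (x j = v (g j) \<or> x j = - v (g j))"
      and bal: "\<forall>k<?n. \<forall>l<?n. card {j\<in>I'. g j = k} \<le> card {j\<in>I'. g j = l} + 1"
      using Suc.hyps(1)[OF cI' fin' unit' eq'] by blast
    define c where "c l = card {j\<in>I'. g j = l}" for l
    have n1: "1 \<le> ?n" by (simp add: Suc_leI)
    have cmin: "q \<le> c l" if "l < ?n" for l
      using balanced_min[of I' g ?n l, OF fin' _ n1 _ that] gx bal cI' unfolding c_def q_def by auto
    define N' where "N' = {j\<in>I'. x i \<bullet> x j \<noteq> 0}"
    have "{j \<in> I. x i \<bullet> x j \<noteq> 0} = insert i N'" using i nz[OF i] unfolding N'_def I'_def by auto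
    moreover have "i \<notin> N'" unfolding N'_def I'_def by simp
    ultimately have "dg x I i = Suc (card N')" unfolding dg_def using fin' N'_def by simp
    then have cN: "card N' = q" using dgq by simp
    have fN: "finite N'" using fin' N'_def by simp
    have sub: "{j\<in>I'. g j = l} \<subseteq> N'" if "l < ?n" "x i \<bullet> v l \<noteq> 0" for l
    proof
      fix j assume j: "j \<in> {j\<in>I'. g j = l}"
      then have "x j = v l \<or> x j = - v l" using gx by auto
      then have "x i \<bullet> x j \<noteq> 0" using that by auto
      then show "j \<in> N'" using j N'_def by auto
    qed
    obtain k where k: "k < ?n" and xk: "x i \<bullet> v k \<noteq> 0" using ob_nonzero[OF ob nz[OF i]] by blast
    have GkN: "{j\<in>I'. g j = k} = N'"
    proof (rule card_subset_eq[OF fN sub[OF k xk]])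
      show "card {j\<in>I'. g j = k} = card N'"
        using card_mono[OF fN sub[OF k xk]] cmin[OF k] cN unfolding c_def by simp
    qed
    have ck: "c k = q" using GkN cN c_def by simp
    have oth: "x i \<bullet> v l = 0" if l: "l < ?n" "l \<noteq> k" for l
    proof (rule ccontr)
      assume "x i \<bullet> v l \<noteq> 0"
      then have s: "{j\<in>I'. g j = l} \<subseteq> N'" using sub l by blast
      have "c l \<ge> 1" using cmin[OF l(1)] q1 by simp
      then have "{j\<in>I'. g j = l} \<noteq> {}" unfolding c_def by (metis card.empty not_one_le_zero)
      then obtain j where "j \<in> {j\<in>I'. g j = l}" by blast
      then show False using s GkN l(2) by auto
    qed
    have xi: "x i = v k \<or> x i = - v k" using ob_line[OF ob k oth] unit i by blast
    define g' where "g' = g(i := k)"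
    have cnt: "card {j\<in>I. g' j = l} = c l + (if l = k then 1 else 0)" for l
    proof -
      have "{j\<in>I. g' j = l} = (if l = k then insert i {j\<in>I'. g j = l} else {j\<in>I'. g j = l})"
        using i unfolding g'_def I'_def by auto
      moreover have "i \<notin> I'" unfolding I'_def by simp
      ultimately show ?thesis unfolding c_def using fin' by (cases "l = k") auto
    qed
    have bal': "\<forall>a<?n. \<forall>b<?n. card {j\<in>I. g' j = a} \<le> card {j\<in>I. g' j = b} + 1"
    proof (intro allI impI)
      fix a b assume a: "a < ?n" and b: "b < ?n"
      have "c a \<le> c b + 1" using bal a b unfolding c_def by blast
      moreover have "c a \<le> c k + 1" using bal a k unfolding c_def by blast
      ultimately show "card {j\<in>I. g' j = a} \<le> card {j\<in>I. g' j = b} + 1"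
        unfolding cnt using ck cmin[OF a] cmin[OF b] by auto
    qed
    have gx': "\<forall>j\<in>I. g' j < ?n \<and> (x j = v (g' j) \<or> x j = - v (g' j))"
    proof
      fix j assume j: "j \<in> I"
      show "g' j < ?n \<and> (x j = v (g' j) \<or> x j = - v (g' j))"
      proof (cases "j = i")
        case True then show ?thesis using k xi g'_def by simp
      next
        case False then show ?thesis using gx j I'_def g'_def by simp
      qed
    qed
    show ?thesis using ob gx' bal' by (intro exI[of _ v] exI[of _ g']) blast
  qed
qed

lemma rcount:
  assumes n: "1 \<le> n" and k: "k < n"
  shows "card {i\<in>{..<N}. i mod n = k} = N div n + (if k < N mod n then 1 else 0)"
proof (induction N)
  case 0 then show ?case by simp
next
  case (Suc N)
  have set: "{i\<in>{..<Suc N}. i mod n = k} = (if N mod n = k then insert N {i\<in>{..<N}. i mod n = k} else {i\<in>{..<N}. i mod n = k})"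
    by (auto simp: less_Suc_eq)
  have cd: "card {i\<in>{..<Suc N}. i mod n = k} = card {i\<in>{..<N}. i mod n = k} + (if N mod n = k then 1 else 0)"
    unfolding set by simp
  have m1: "Suc N mod n = (if Suc (N mod n) = n then 0 else Suc (N mod n))" by (rule mod_Suc)
  have d1: "Suc N div n = (if Suc N mod n = 0 then Suc (N div n) else N div n)" by (rule div_Suc)
  have lt: "N mod n < n" using n by simp
  show ?case
  proof (cases "Suc (N mod n) = n")
    case True
    then have "Suc N mod n = 0" "Suc N div n = Suc (N div n)" using m1 d1 by simp_all
    then show ?thesis using cd Suc.IH True k by auto
  next
    case False
    then have a: "Suc N mod n = Suc (N mod n)" using m1 by simp
    then have "Suc N div n = N div n" using d1 by simp
    then show ?thesis using cd Suc.IH a k lt by auto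
  qed
qed

lemma glue:
  fixes f :: "'a \<Rightarrow> 'c" and h :: "'b \<Rightarrow> 'c"
  assumes fA: "finite A" and fB: "finite B"
    and c: "\<forall>y. card {a\<in>A. f a = y} = card {b\<in>B. h b = y}"
  shows "\<exists>\<sigma>. bij_betw \<sigma> B A \<and> (\<forall>b\<in>B. f (\<sigma> b) = h b)"
proof -
  have "\<forall>y. \<exists>\<beta>. bij_betw \<beta> {b\<in>B. h b = y} {a\<in>A. f a = y}"
  proof
    fix y
    have "finite {b\<in>B. h b = y}" "finite {a\<in>A. f a = y}" using fA fB by simp_all
    moreover have "card {b\<in>B. h b = y} = card {a\<in>A. f a = y}" using c by simp
    ultimately show "\<exists>\<beta>. bij_betw \<beta> {b\<in>B. h b = y} {a\<in>A. f a = y}" by (rule finite_same_card_bij)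
  qed
  from choice[OF this] obtain \<beta> where \<beta>: "\<forall>y. bij_betw (\<beta> y) {b\<in>B. h b = y} {a\<in>A. f a = y}" by (elim exE)
  define \<sigma> where "\<sigma> b = \<beta> (h b) b" for b
  have maps: "\<sigma> b \<in> A \<and> f (\<sigma> b) = h b" if b: "b \<in> B" for b
  proof -
    have "b \<in> {b'\<in>B. h b' = h b}" using b by simp
    then have "\<beta> (h b) b \<in> {a\<in>A. f a = h b}" using bij_betw_apply[OF \<beta>[rule_format, of "h b"]] by blast
    then show ?thesis unfolding \<sigma>_def by simp
  qed
  have inj: "inj_on \<sigma> B"
  proof
    fix b1 b2 assume b1: "b1 \<in> B" and b2: "b2 \<in> B" and e: "\<sigma> b1 = \<sigma> b2"
    have hy: "h b1 = h b2" using maps[OF b1] maps[OF b2] e by metis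
    have "inj_on (\<beta> (h b1)) {b\<in>B. h b = h b1}" using \<beta> bij_betw_imp_inj_on by blast
    moreover have "\<beta> (h b1) b1 = \<beta> (h b1) b2" using e hy unfolding \<sigma>_def by simp
    ultimately show "b1 = b2" using b1 b2 hy by (auto simp: inj_on_def)
  qed
  have surj: "\<sigma> ` B = A"
  proof
    show "\<sigma> ` B \<subseteq> A" using maps by blast
    show "A \<subseteq> \<sigma> ` B"
    proof
      fix a assume a: "a \<in> A"
      have "a \<in> {a'\<in>A. f a' = f a}" using a by simp
      then have "a \<in> \<beta> (f a) ` {b\<in>B. h b = f a}" using bij_betw_imp_surj_on[OF \<beta>[rule_format, of "f a"]] by simp
      then obtain b where b: "b \<in> B" "h b = f a" "a = \<beta> (f a) b" by blast
      then have "\<sigma> b = a" unfolding \<sigma>_def by simp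
      then show "a \<in> \<sigma> ` B" using b by blast
    qed
  qed
  have "bij_betw \<sigma> B A" using inj surj by (simp add: bij_betw_def)
  moreover have "\<forall>b\<in>B. f (\<sigma> b) = h b" using maps by blast
  ultimately show ?thesis by (intro exI[of _ \<sigma>]) simp
qed

lemma balanced_vals:
  fixes g :: "'a \<Rightarrow> nat"
  assumes fin: "finite I" and gI: "\<forall>i\<in>I. g i < n" and n: "1 \<le> n"
    and bal: "\<forall>k<n. \<forall>l<n. card {i\<in>I. g i = k} \<le> card {i\<in>I. g i = l} + 1"
  shows "\<forall>k<n. card {i\<in>I. g i = k} = card I div n \<or> card {i\<in>I. g i = k} = card I div n + 1"
    and "card {k\<in>{..<n}. card {i\<in>I. g i = k} = card I div n + 1} = card I mod n"
proof -
  define c where "c k = card {i\<in>I. g i = k}" for k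
  define q where "q = card I div n"
  have sumc: "(\<Sum>l<n. c l) = card I"
    using sum.group[OF fin, of "{..<n}" g "\<lambda>_. (1::nat)"] gI unfolding c_def by auto
  have low: "q \<le> c k" if "k < n" for k
    using balanced_min[of I g n k, OF fin _ n _ that] gI bal unfolding c_def q_def by auto
  have up: "c k \<le> q + 1" if k: "k < n" for k
  proof (rule ccontr)
    assume "\<not> ?thesis"
    then have big: "q + 2 \<le> c k" by simp
    have all: "q + 1 \<le> c l" if "l < n" for l
      using bal k that big unfolding c_def by fastforce
    have "(\<Sum>l<n. q + 1) < (\<Sum>l<n. c l)"
      by (rule sum_strict_mono_ex1) (simp, use all in simp, use k big in force)
    then have "n * (q + 1) < card I" using sumc by simp
    moreover have "card I < n * (q + 1)"
    proof -
      have "card I = n * q + card I mod n" unfolding q_def by simp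
      moreover have "card I mod n < n" using n by simp
      ultimately show ?thesis by simp
    qed
    ultimately show False by simp
  qed
  have vals: "c k = q \<or> c k = q + 1" if "k < n" for k
    using low[OF that] up[OF that] by linarith
  then show "\<forall>k<n. card {i\<in>I. g i = k} = card I div n \<or> card {i\<in>I. g i = k} = card I div n + 1"
    unfolding c_def q_def by blast
  have "(\<Sum>l<n. c l) = (\<Sum>l<n. q + (if c l = q + 1 then 1 else 0))"
    by (rule sum.cong) (use vals in auto)
  also have "\<dots> = n * q + card {l\<in>{..<n}. c l = q + 1}"
    using card_filter_sum[of "{..<n}" "\<lambda>l. c l = q + 1"] by (simp add: sum.distrib)
  finally have "card {l\<in>{..<n}. c l = q + 1} = card I - n * q" using sumc by simp
  also have "\<dots> = card I mod n" unfolding q_def by (metis add_diff_cancel_left' div_mult_mod_eq mult.commute)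
  finally show "card {k\<in>{..<n}. card {i\<in>I. g i = k} = card I div n + 1} = card I mod n"
    unfolding c_def q_def .
qed

lemma lemmaC:
  fixes x :: "nat \<Rightarrow> real^'n"
  assumes ob: "orthonormal_basis v"
  shows "(\<forall>i<N. x i = v (i mod CARD('n)) \<or> x i = - v (i mod CARD('n))) \<Longrightarrow> PP x {..<N} = TT CARD('n) N"
proof (induction N)
  case 0 then show ?case by (simp add: PP_def)
next
  case (Suc N)
  let ?n = "CARD('n)"
  have n1: "1 \<le> ?n" by (simp add: Suc_leI)
  have h: "\<forall>i<N. x i = v (i mod ?n) \<or> x i = - v (i mod ?n)" using Suc.prems by simp
  have IH: "PP x {..<N} = TT ?n N" using Suc.IH h by simp
  have Nl: "N mod ?n < ?n" by simp
  have xN: "x N = v (N mod ?n) \<or> x N = - v (N mod ?n)" using Suc.prems by simp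
  have nzN: "x N \<noteq> 0" using xN ob_norm[OF ob Nl] by auto
  have rem: "PP x {..<Suc N} + 1 = PP x ({..<Suc N} - {N}) + 2 * dg x {..<Suc N} N"
    by (rule PP_remove) (use nzN in simp_all)
  have e: "{..<Suc N} - {N} = {..<N}" by auto
  have iff: "x N \<bullet> x j \<noteq> 0 \<longleftrightarrow> N mod ?n = j mod ?n" if "j < Suc N" for j
  proof (rule pm_inner_nz[OF ob Nl])
    show "j mod ?n < ?n" by simp
    show "x N = v (N mod ?n) \<or> x N = - v (N mod ?n)" by (rule xN)
    show "x j = v (j mod ?n) \<or> x j = - v (j mod ?n)" using Suc.prems that by simp
  qed
  have "{j\<in>{..<Suc N}. x N \<bullet> x j \<noteq> 0} = {j\<in>{..<Suc N}. N mod ?n = j mod ?n}"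
    by (rule Collect_cong) (use iff in auto)
  also have "\<dots> = insert N {j\<in>{..<N}. j mod ?n = N mod ?n}" by (auto simp: less_Suc_eq)
  finally have "{j\<in>{..<Suc N}. x N \<bullet> x j \<noteq> 0} = insert N {j\<in>{..<N}. j mod ?n = N mod ?n}" .
  then have "dg x {..<Suc N} N = Suc (N div ?n)" unfolding dg_def using rcount[OF n1 Nl, of N] by simp
  then show ?case using rem e IH by simp
qed

lemma relabel:
  fixes x :: "nat \<Rightarrow> real^'n" and v :: "nat \<Rightarrow> real^'n"
  assumes ob: "orthonormal_basis v"
    and gx: "\<forall>i\<in>{..<N}. g i < CARD('n) \<and> (x i = v (g i) \<or> x i = - v (g i))"
    and bal: "\<forall>k<CARD('n). \<forall>l<CARD('n). card {i\<in>{..<N}. g i = k} \<le> card {i\<in>{..<N}. g i = l} + 1"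
  shows "\<exists>w \<sigma>. orthonormal_basis w \<and> bij_betw \<sigma> {..<N} {..<N} \<and>
      (\<forall>i<N. x (\<sigma> i) = w (i mod CARD('n)) \<or> x (\<sigma> i) = - w (i mod CARD('n)))"
proof -
  let ?n = "CARD('n)"
  have n1: "1 \<le> ?n" by (simp add: Suc_leI)
  define c where "c k = card {i\<in>{..<N}. g i = k}" for k
  define r where "r k = card {i\<in>{..<N}. i mod ?n = k}" for k
  define q where "q = N div ?n"
  have gI: "\<forall>i\<in>{..<N}. g i < ?n" using gx by blast
  have cv: "\<forall>k<?n. c k = q \<or> c k = q + 1" and cc: "card {k\<in>{..<?n}. c k = q + 1} = N mod ?n"
    using balanced_vals[of "{..<N}" g ?n, OF _ gI n1 bal] unfolding c_def q_def by auto
  have rv: "r k = q + (if k < N mod ?n then 1 else 0)" if "k < ?n" for k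
    using rcount[OF n1 that] unfolding r_def q_def by simp
  have rc: "card {k\<in>{..<?n}. r k = q + 1} = N mod ?n"
  proof -
    have Nl: "N mod ?n < ?n" by simp
    have "{k\<in>{..<?n}. r k = q + 1} = {..<N mod ?n}"
    proof (rule set_eqI)
      fix k
      show "k \<in> {k\<in>{..<?n}. r k = q + 1} \<longleftrightarrow> k \<in> {..<N mod ?n}"
      proof (cases "k < ?n")
        case True
        have rk: "r k = q + (if k < N mod ?n then 1 else 0)" by (rule rv[OF True])
        show ?thesis
        proof (cases "k < N mod ?n")
          case True2: True
          then show ?thesis using rk True by simp
        next
          case False2: False
          then show ?thesis using rk True by simp
        qed
      next
        case False
        then have "\<not> k < N mod ?n" using Nl by linarith
        then show ?thesis using False by simp
      qed
    qed
    then show ?thesis by simp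
  qed
  have cnt: "\<forall>y. card {a\<in>{..<?n}. (c a = q + 1) = y} = card {b\<in>{..<?n}. (r b = q + 1) = y}"
  proof
    fix y :: bool
    show "card {a\<in>{..<?n}. (c a = q + 1) = y} = card {b\<in>{..<?n}. (r b = q + 1) = y}"
    proof (cases y)
      case True then show ?thesis using cc rc by simp
    next
      case False
      have "{a\<in>{..<?n}. (c a = q + 1) = y} = {..<?n} - {a\<in>{..<?n}. c a = q + 1}" using False by auto
      moreover have "{b\<in>{..<?n}. (r b = q + 1) = y} = {..<?n} - {b\<in>{..<?n}. r b = q + 1}" using False by auto
      moreover have "card ({..<?n} - {a\<in>{..<?n}. c a = q + 1}) = ?n - N mod ?n"
        using card_Diff_subset[of "{a\<in>{..<?n}. c a = q + 1}" "{..<?n}"] cc by auto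
      moreover have "card ({..<?n} - {a\<in>{..<?n}. r a = q + 1}) = ?n - N mod ?n"
        using card_Diff_subset[of "{a\<in>{..<?n}. r a = q + 1}" "{..<?n}"] rc by auto
      ultimately show ?thesis by simp
    qed
  qed
  have "\<exists>\<pi>. bij_betw \<pi> {..<?n} {..<?n} \<and> (\<forall>b\<in>{..<?n}. (c (\<pi> b) = q + 1) = (r b = q + 1))"
    by (rule glue[OF _ _ cnt]) simp_all
  then obtain \<pi> where \<pi>: "bij_betw \<pi> {..<?n} {..<?n}" and \<pi>e: "\<forall>b\<in>{..<?n}. (c (\<pi> b) = q + 1) = (r b = q + 1)"
    by (elim exE conjE)
  have \<pi>lt: "\<pi> k < ?n" if "k < ?n" for k using bij_betw_apply[OF \<pi>] that by simp
  have \<pi>inj: "inj_on \<pi> {..<?n}" using \<pi> bij_betw_imp_inj_on by blast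
  have crk: "c (\<pi> k) = r k" if k: "k < ?n" for k
  proof -
    have a: "c (\<pi> k) = q \<or> c (\<pi> k) = q + 1" using cv \<pi>lt[OF k] by blast
    have b: "r k = q \<or> r k = q + 1" using rv[OF k] by simp
    show ?thesis using a b \<pi>e k by auto
  qed
  have cnt2: "\<forall>y. card {a\<in>{..<N}. g a = y} = card {b\<in>{..<N}. \<pi> (b mod ?n) = y}"
  proof
    fix y
    show "card {a\<in>{..<N}. g a = y} = card {b\<in>{..<N}. \<pi> (b mod ?n) = y}"
    proof (cases "y < ?n")
      case True
      then have "y \<in> \<pi> ` {..<?n}" using bij_betw_imp_surj_on[OF \<pi>] by simp
      then obtain k where k: "k < ?n" "y = \<pi> k" by auto
      have "{b\<in>{..<N}. \<pi> (b mod ?n) = y} = {b\<in>{..<N}. b mod ?n = k}"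
      proof -
        have "\<pi> (b mod ?n) = \<pi> k \<longleftrightarrow> b mod ?n = k" for b
          using \<pi>inj k(1) by (auto simp: inj_on_def)
        then show ?thesis using k(2) by simp
      qed
      then show ?thesis using crk[OF k(1)] k(2) unfolding c_def r_def by simp
    next
      case False
      have "{a\<in>{..<N}. g a = y} = {}" using gI False by auto
      moreover have "{b\<in>{..<N}. \<pi> (b mod ?n) = y} = {}" using \<pi>lt False by fastforce
      ultimately show ?thesis by (simp only:)
    qed
  qed
  have "\<exists>\<sigma>. bij_betw \<sigma> {..<N} {..<N} \<and> (\<forall>b\<in>{..<N}. g (\<sigma> b) = \<pi> (b mod ?n))"
    by (rule glue[OF _ _ cnt2]) simp_all
  then obtain \<sigma> where \<sigma>: "bij_betw \<sigma> {..<N} {..<N}" and \<sigma>e: "\<forall>b\<in>{..<N}. g (\<sigma> b) = \<pi> (b mod ?n)"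
    by (elim exE conjE)
  define w where "w k = v (\<pi> k)" for k
  have obw: "orthonormal_basis w"
    unfolding orthonormal_basis_def
  proof (intro conjI allI impI)
    fix j k assume j: "j < ?n" and k: "k < ?n"
    have "w j \<bullet> w k = (if \<pi> j = \<pi> k then 1 else 0)" unfolding w_def by (rule ob_inner[OF ob \<pi>lt[OF j] \<pi>lt[OF k]])
    moreover have "\<pi> j = \<pi> k \<longleftrightarrow> j = k" using \<pi>inj j k by (auto simp: inj_on_def)
    ultimately show "w j \<bullet> w k = (if j = k then 1 else 0)" by simp
  next
    have "w ` {..<?n} = v ` (\<pi> ` {..<?n})" unfolding w_def by auto
    also have "\<dots> = v ` {..<?n}" using bij_betw_imp_surj_on[OF \<pi>] by simp
    finally show "span (w ` {..<?n}) = UNIV" using ob unfolding orthonormal_basis_def by simp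
  qed
  have xs: "\<forall>i<N. x (\<sigma> i) = w (i mod ?n) \<or> x (\<sigma> i) = - w (i mod ?n)"
  proof (intro allI impI)
    fix i assume i: "i < N"
    have si: "\<sigma> i \<in> {..<N}" using bij_betw_apply[OF \<sigma>] i by simp
    then have "x (\<sigma> i) = v (g (\<sigma> i)) \<or> x (\<sigma> i) = - v (g (\<sigma> i))" using gx by blast
    moreover have "g (\<sigma> i) = \<pi> (i mod ?n)" using \<sigma>e i by simp
    ultimately show "x (\<sigma> i) = w (i mod ?n) \<or> x (\<sigma> i) = - w (i mod ?n)" unfolding w_def by simp
  qed
  show ?thesis using obw \<sigma> xs by (intro exI[of _ w] exI[of _ \<sigma>] conjI) simp_all
qed

lemma expect_fin:
  fixes \<mu> :: "'a pmf" and J :: "'j set" and f :: "'a \<Rightarrow> real"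
  assumes fin: "finite J" and m: "\<forall>A. measure (measure_pmf \<mu>) A = (\<Sum>j\<in>J. w j * indicator A (z j))"
  shows "measure_pmf.expectation \<mu> f = (\<Sum>j\<in>J. w j * f (z j))"
proof -
  have pm: "pmf \<mu> s = (\<Sum>j\<in>J. w j * indicator {s} (z j))" for s
    using m[rule_format, of "{s}"] by (simp add: measure_pmf_single)
  have sub: "set_pmf \<mu> \<subseteq> z ` J"
  proof
    fix s assume s: "s \<in> set_pmf \<mu>"
    show "s \<in> z ` J"
    proof (rule ccontr)
      assume ns: "s \<notin> z ` J"
      have "\<forall>j\<in>J. w j * indicator {s} (z j) = (0::real)" using ns by (auto simp: indicator_def)
      then have "(\<Sum>j\<in>J. w j * indicator {s} (z j)) = (0::real)" by (rule sum.neutral)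
      then have "pmf \<mu> s = 0" using pm[of s] by simp
      then show False using s by (simp add: pmf_eq_0_set_pmf)
    qed
  qed
  have fz: "finite (z ` J)" using fin by simp
  have "measure_pmf.expectation \<mu> f = (\<Sum>s\<in>z ` J. pmf \<mu> s *\<^sub>R f s)"
    by (rule integral_measure_pmf[OF fz]) (use sub in auto)
  also have "\<dots> = (\<Sum>s\<in>z ` J. (\<Sum>j\<in>J. w j * indicator {s} (z j)) * f s)" using pm by simp
  also have "\<dots> = (\<Sum>s\<in>z ` J. \<Sum>j\<in>J. w j * (indicator {s} (z j) * f s))"
    by (simp add: sum_distrib_right mult.assoc)
  also have "\<dots> = (\<Sum>j\<in>J. \<Sum>s\<in>z ` J. w j * (indicator {s} (z j) * f s))"
    by (rule sum.swap)
  also have "\<dots> = (\<Sum>j\<in>J. w j * (\<Sum>s\<in>z ` J. indicator {s} (z j) * f s))"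
    by (simp add: sum_distrib_left)
  also have "\<dots> = (\<Sum>j\<in>J. w j * f (z j))"
  proof (rule sum.cong[OF refl])
    fix j assume j: "j \<in> J"
    have "(\<Sum>s\<in>z ` J. indicator {s} (z j) * f s) = (\<Sum>s\<in>z ` J. if z j = s then f s else 0)"
      by (rule sum.cong) (auto simp: indicator_def)
    also have "\<dots> = f (z j)" using j fz by (simp add: sum.delta)
    finally show "w j * (\<Sum>s\<in>z ` J. indicator {s} (z j) * f s) = w j * f (z j)" by simp
  qed
  finally show ?thesis .
qed

lemma E_fin:
  fixes \<mu> :: "(real^'n) pmf" and J :: "'j set"
  assumes fin: "finite J" and m: "\<forall>A. measure (measure_pmf \<mu>) A = (\<Sum>j\<in>J. w j * indicator A (z j))"
  shows "E_inf \<mu> = 1/2 * (\<Sum>i\<in>J. w i * (\<Sum>j\<in>J. w j * Lambda_inf (z i) (z j)))"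
  unfolding E_inf_def by (simp add: expect_fin[OF fin m])

lemma real_card_filter:
  assumes fA: "finite A"
  shows "real (card {j\<in>A. P j}) = (\<Sum>j\<in>A. if P j then 1 else 0)"
  using fA by (simp add: sum.If_cases Int_def)

lemma E_emp:
  fixes \<mu> :: "(real^'n) pmf"
  assumes emp: "is_empirical \<mu> N x"
  shows "E_inf \<mu> = (real N ^ 2 - real (PP x {..<N})) / (2 * real N ^ 2)"
proof -
  have m: "\<forall>A. measure (measure_pmf \<mu>) A = (\<Sum>j\<in>{..<N}. (1 / real N) * indicator A (x j))"
    using emp unfolding is_empirical_def by (simp add: sum_distrib_left)
  have E: "E_inf \<mu> = 1/2 * (\<Sum>i<N. (1 / real N) * (\<Sum>j<N. (1 / real N) * Lambda_inf (x i) (x j)))"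
    using E_fin[OF _ m] by simp
  have row: "(\<Sum>j<N. Lambda_inf (x i) (x j)) = real N - real (dg x {..<N} i)" for i
  proof -
    have "(\<Sum>j<N. Lambda_inf (x i) (x j)) = (\<Sum>j<N. 1 - (if x i \<bullet> x j \<noteq> 0 then 1 else 0))"
      by (rule sum.cong) (auto simp: Lambda_inf_def)
    also have "\<dots> = real N - (\<Sum>j<N. if x i \<bullet> x j \<noteq> 0 then 1 else 0)" by (simp add: sum_subtractf)
    also have "(\<Sum>j<N. if x i \<bullet> x j \<noteq> 0 then 1 else (0::real)) = real (dg x {..<N} i)"
      unfolding dg_def by (rule real_card_filter[symmetric]) simp
    finally show ?thesis .
  qed
  have tot: "(\<Sum>i<N. \<Sum>j<N. Lambda_inf (x i) (x j)) = real N ^ 2 - real (PP x {..<N})"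
  proof -
    have "(\<Sum>i<N. \<Sum>j<N. Lambda_inf (x i) (x j)) = (\<Sum>i<N. real N - real (dg x {..<N} i))"
      using row by simp
    also have "\<dots> = real N * real N - (\<Sum>i<N. real (dg x {..<N} i))" by (simp add: sum_subtractf)
    also have "(\<Sum>i<N. real (dg x {..<N} i)) = real (PP x {..<N})" unfolding PP_def by simp
    finally show ?thesis by (simp add: power2_eq_square)
  qed
  have "E_inf \<mu> = 1/2 * (1 / real N) * (1 / real N) * (\<Sum>i<N. \<Sum>j<N. Lambda_inf (x i) (x j))"
    unfolding E by (simp add: sum_distrib_left mult.assoc)
  also have "\<dots> = (real N ^ 2 - real (PP x {..<N})) / (2 * real N ^ 2)"
    unfolding tot by (simp add: power2_eq_square field_simps)
  finally show ?thesis .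
qed

lemma emp_exists:
  fixes x :: "nat \<Rightarrow> real^'n"
  assumes N: "N \<ge> 1"
  shows "is_empirical (map_pmf x (pmf_of_set {..<N})) N x"
  unfolding is_empirical_def
proof
  fix A
  have "0 \<in> {..<N}" using N by simp
  then have ne: "{..<N} \<noteq> {}" by blast
  have "measure (measure_pmf (map_pmf x (pmf_of_set {..<N}))) A = measure (measure_pmf (pmf_of_set {..<N})) (x -` A)"
    by simp
  also have "\<dots> = real (card ({..<N} \<inter> x -` A)) / real (card {..<N})"
    using measure_pmf_of_set[OF ne] by simp
  also have "\<dots> = 1 / real N * (\<Sum>i<N. indicator A (x i))"
  proof -
    have "(\<Sum>i<N. indicator A (x i)) = (\<Sum>i<N. indicator (x -` A) i :: real)"
      by (rule sum.cong) (auto simp: indicator_def)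
    also have "\<dots> = (\<Sum>i<N. if i \<in> x -` A then 1 else 0)" by (rule sum.cong) (auto simp: indicator_def)
    also have "\<dots> = real (card {i\<in>{..<N}. i \<in> x -` A})" by (rule real_card_filter[symmetric]) simp
    also have "{i\<in>{..<N}. i \<in> x -` A} = {..<N} \<inter> x -` A" by auto
    finally show ?thesis by simp
  qed
  finally show "measure (measure_pmf (map_pmf x (pmf_of_set {..<N}))) A = 1 / real N * (\<Sum>i<N. indicator A (x i))" .
qed

lemma W_eq:
  fixes S :: "(real^'n) set" and p :: "real^'n \<Rightarrow> real"
  assumes fin: "finite S"
  shows "(\<Sum>s\<in>S. p s * (s \<bullet> u)\<^sup>2) = (\<Sum>k\<in>UNIV. \<Sum>l\<in>UNIV. u$k * u$l * (\<Sum>s\<in>S. p s * (s$k * s$l)))"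
proof -
  have "(\<Sum>s\<in>S. p s * (s \<bullet> u)\<^sup>2) = (\<Sum>s\<in>S. \<Sum>k\<in>UNIV. \<Sum>l\<in>UNIV. u$k * u$l * (p s * (s$k * s$l)))"
    by (simp add: inner_vec_def power2_eq_square sum_product sum_distrib_left mult_ac)
  also have "\<dots> = (\<Sum>k\<in>UNIV. \<Sum>s\<in>S. \<Sum>l\<in>UNIV. u$k * u$l * (p s * (s$k * s$l)))"
    by (rule sum.swap)
  also have "\<dots> = (\<Sum>k\<in>UNIV. \<Sum>l\<in>UNIV. \<Sum>s\<in>S. u$k * u$l * (p s * (s$k * s$l)))"
    by (rule sum.cong[OF refl]) (rule sum.swap)
  also have "\<dots> = (\<Sum>k\<in>UNIV. \<Sum>l\<in>UNIV. u$k * u$l * (\<Sum>s\<in>S. p s * (s$k * s$l)))"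
    by (simp add: sum_distrib_left)
  finally show ?thesis .
qed

lemma F_eq:
  fixes S :: "(real^'n) set" and p :: "real^'n \<Rightarrow> real"
  assumes fin: "finite S"
  defines "M \<equiv> \<lambda>k l. \<Sum>s\<in>S. p s * (s$k * s$l)"
  shows "(\<Sum>t\<in>S. p t * (\<Sum>s\<in>S. p s * (s \<bullet> t)\<^sup>2)) = (\<Sum>k\<in>UNIV. \<Sum>l\<in>UNIV. (M k l)\<^sup>2)"
proof -
  have "(\<Sum>t\<in>S. p t * (\<Sum>s\<in>S. p s * (s \<bullet> t)\<^sup>2)) = (\<Sum>t\<in>S. p t * (\<Sum>k\<in>UNIV. \<Sum>l\<in>UNIV. t$k * t$l * M k l))"
    unfolding M_def using W_eq[OF fin] by simp
  also have "\<dots> = (\<Sum>t\<in>S. \<Sum>k\<in>UNIV. \<Sum>l\<in>UNIV. M k l * (p t * (t$k * t$l)))"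
    by (simp add: sum_distrib_left mult_ac)
  also have "\<dots> = (\<Sum>k\<in>UNIV. \<Sum>t\<in>S. \<Sum>l\<in>UNIV. M k l * (p t * (t$k * t$l)))"
    by (rule sum.swap)
  also have "\<dots> = (\<Sum>k\<in>UNIV. \<Sum>l\<in>UNIV. \<Sum>t\<in>S. M k l * (p t * (t$k * t$l)))"
    by (rule sum.cong[OF refl]) (rule sum.swap)
  also have "\<dots> = (\<Sum>k\<in>UNIV. \<Sum>l\<in>UNIV. M k l * M k l)"
    by (simp add: sum_distrib_left M_def)
  finally show ?thesis by (simp add: power2_eq_square)
qed

lemma trace_eq:
  fixes S :: "(real^'n) set" and p :: "real^'n \<Rightarrow> real"
  assumes fin: "finite S" and unit: "\<forall>s\<in>S. norm s = 1" and sum1: "(\<Sum>s\<in>S. p s) = 1"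
  shows "(\<Sum>k\<in>UNIV. \<Sum>s\<in>S. p s * (s$k * s$k)) = 1"
proof -
  have "(\<Sum>k\<in>UNIV. \<Sum>s\<in>S. p s * (s$k * s$k)) = (\<Sum>s\<in>S. p s * (s \<bullet> s))"
    by (subst sum.swap) (simp add: inner_vec_def sum_distrib_left)
  also have "\<dots> = (\<Sum>s\<in>S. p s)"
    by (rule sum.cong[OF refl]) (use unit in \<open>simp add: dot_square_norm\<close>)
  finally show ?thesis using sum1 by simp
qed

lemma D2_eq:
  fixes S :: "(real^'n) set" and p :: "real^'n \<Rightarrow> real"
  assumes fin: "finite S" and unit: "\<forall>s\<in>S. norm s = 1" and sum1: "(\<Sum>s\<in>S. p s) = 1"
  defines "M \<equiv> \<lambda>k l. \<Sum>s\<in>S. p s * (s$k * s$l)"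
  shows "(\<Sum>k\<in>UNIV. \<Sum>l\<in>UNIV. (M k l - (if k = l then 1 / real CARD('n) else 0))\<^sup>2)
      = (\<Sum>k\<in>UNIV. \<Sum>l\<in>UNIV. (M k l)\<^sup>2) - 1 / real CARD('n)"
proof -
  let ?c = "1 / real CARD('n)"
  define d where "d k l = (if k = l then ?c else 0)" for k l :: 'n
  have sq: "(M k l - d k l)\<^sup>2 = (M k l)\<^sup>2 - 2 * (M k l * d k l) + (d k l)\<^sup>2" for k l
    by (simp add: power2_eq_square algebra_simps)
  have md: "(\<Sum>l\<in>UNIV. M k l * d k l) = M k k * ?c" for k
    unfolding d_def by (simp add: if_distrib cong: if_cong)
  have dd: "(\<Sum>l\<in>UNIV. (d k l)\<^sup>2) = ?c\<^sup>2" for k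
  proof -
    have "(d k l)\<^sup>2 = (if k = l then ?c\<^sup>2 else 0)" for l unfolding d_def by simp
    then show ?thesis by simp
  qed
  have tr: "(\<Sum>k\<in>UNIV. M k k) = 1" unfolding M_def using trace_eq[OF fin unit sum1] by simp
  have "(\<Sum>k\<in>UNIV. \<Sum>l\<in>UNIV. (M k l - d k l)\<^sup>2)
      = (\<Sum>k\<in>UNIV. \<Sum>l\<in>UNIV. (M k l)\<^sup>2) - 2 * (\<Sum>k\<in>UNIV. \<Sum>l\<in>UNIV. M k l * d k l) + (\<Sum>k\<in>UNIV. \<Sum>l\<in>UNIV. (d k l)\<^sup>2)"
    unfolding sq by (simp add: sum.distrib sum_subtractf sum_distrib_left)
  also have "(\<Sum>k\<in>UNIV. \<Sum>l\<in>UNIV. M k l * d k l) = ?c" using md tr by (simp add: sum_divide_distrib[symmetric])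
  also have "(\<Sum>k\<in>UNIV. \<Sum>l\<in>UNIV. (d k l)\<^sup>2) = ?c" using dd by (simp add: power2_eq_square)
  finally show ?thesis unfolding d_def by simp
qed

lemma Lam_le:
  fixes s t :: "real^'n"
  assumes "norm s = 1" "norm t = 1"
  shows "Lambda_inf s t \<le> 1 - (s \<bullet> t)\<^sup>2"
proof -
  have "\<bar>s \<bullet> t\<bar> \<le> 1" using Cauchy_Schwarz_ineq2[of s t] assms by simp
  then have "(s \<bullet> t)\<^sup>2 \<le> 1" by (simp add: abs_square_le_1)
  then show ?thesis by (auto simp: Lambda_inf_def)
qed

lemma frame_identity:
  fixes S :: "(real^'n) set" and p :: "real^'n \<Rightarrow> real"
  assumes fin: "finite S" and unit: "\<forall>s\<in>S. norm s = 1" and sum1: "(\<Sum>s\<in>S. p s) = 1"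
  defines "M \<equiv> \<lambda>k l. \<Sum>s\<in>S. p s * (s$k * s$l)"
  shows "(\<Sum>s\<in>S. p s * (\<Sum>t\<in>S. p t * Lambda_inf s t)) = 1 - 1 / real CARD('n)
     - (\<Sum>s\<in>S. p s * (\<Sum>t\<in>S. p t * (1 - (s \<bullet> t)\<^sup>2 - Lambda_inf s t)))
     - (\<Sum>k\<in>UNIV. \<Sum>l\<in>UNIV. (M k l - (if k = l then 1 / real CARD('n) else 0))\<^sup>2)"
proof -
  have F: "(\<Sum>s\<in>S. p s * (\<Sum>t\<in>S. p t * (s \<bullet> t)\<^sup>2)) = (\<Sum>k\<in>UNIV. \<Sum>l\<in>UNIV. (M k l)\<^sup>2)"
  proof -
    have "(\<Sum>s\<in>S. p s * (\<Sum>t\<in>S. p t * (s \<bullet> t)\<^sup>2)) = (\<Sum>s\<in>S. p s * (\<Sum>t\<in>S. p t * (t \<bullet> s)\<^sup>2))"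
      by (simp add: inner_commute)
    then show ?thesis using F_eq[OF fin, of p] unfolding M_def by simp
  qed
  have D2: "(\<Sum>k\<in>UNIV. \<Sum>l\<in>UNIV. (M k l - (if k = l then 1 / real CARD('n) else 0))\<^sup>2)
      = (\<Sum>k\<in>UNIV. \<Sum>l\<in>UNIV. (M k l)\<^sup>2) - 1 / real CARD('n)"
    unfolding M_def by (rule D2_eq[OF fin unit sum1])
  have split: "(\<Sum>s\<in>S. p s * (\<Sum>t\<in>S. p t * (1 - (s \<bullet> t)\<^sup>2 - Lambda_inf s t)))
     = (\<Sum>s\<in>S. p s) * (\<Sum>t\<in>S. p t) - (\<Sum>s\<in>S. p s * (\<Sum>t\<in>S. p t * (s \<bullet> t)\<^sup>2))
       - (\<Sum>s\<in>S. p s * (\<Sum>t\<in>S. p t * Lambda_inf s t))"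
    by (simp add: algebra_simps sum_subtractf sum_distrib_left sum_distrib_right sum.distrib)
  show ?thesis using split F D2 sum1 by simp
qed

lemma std_ob: "\<exists>v :: nat \<Rightarrow> real^'n. orthonormal_basis v"
proof -
  have fB: "finite (Basis :: (real^'n) set)" by simp
  obtain e :: "nat \<Rightarrow> real^'n" where e: "bij_betw e {0..<card (Basis :: (real^'n) set)} Basis"
    using ex_bij_betw_nat_finite[OF fB] by blast
  have "card (Basis :: (real^'n) set) = CARD('n)" by simp
  then have e': "bij_betw e {..<CARD('n)} Basis" using e by (simp add: atLeast0LessThan)
  have "orthonormal_basis e"
  proof (rule ob_of_set[OF e'])
    fix a b :: "real^'n" assume "a \<in> Basis" "b \<in> Basis" "a \<noteq> b"
    then show "a \<bullet> b = 0" by (simp add: inner_not_same_Basis)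
  next
    fix a :: "real^'n" assume "a \<in> Basis" then show "norm a = 1" by simp
  qed
  then show ?thesis by blast
qed

lemma part1:
  fixes \<mu> :: "(real^'n) pmf"
  assumes N: "N \<ge> 1"
  shows "maximizes_on E_inf (P_N_eq N) \<mu> \<longleftrightarrow>
     (\<exists>v x. orthonormal_basis v \<and> (\<forall>i<N. x i \<in> sphere 0 1) \<and> is_empirical \<mu> N x \<and>
        (\<forall>i<N. x i \<in> {v (i mod CARD('n)), - v (i mod CARD('n))}))"
proof -
  let ?n = "CARD('n)"
  have Npos: "0 < real N ^ 2" using N by simp
  have lowerb: "TT ?n N \<le> PP y {..<N}" if y: "\<forall>i<N. y i \<in> sphere 0 1" for y :: "nat \<Rightarrow> real^'n"
  proof -
    have "TT ?n (card {..<N}) \<le> PP y {..<N}"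
      by (rule lemmaA) (use y in auto)
    then show ?thesis by simp
  qed
  have Eform: "E_inf \<nu> = (real N ^ 2 - real (PP y {..<N})) / (2 * real N ^ 2)" if "is_empirical \<nu> N y"
    for \<nu> :: "(real^'n) pmf" and y
    by (rule E_emp[OF that])
  show ?thesis
  proof
    assume mx: "maximizes_on E_inf (P_N_eq N) \<mu>"
    then have "\<mu> \<in> P_N_eq N" unfolding maximizes_on_def by blast
    then obtain x where xs: "\<forall>i<N. x i \<in> sphere 0 1" and xe: "is_empirical \<mu> N x"
      unfolding P_N_eq_def by blast
    obtain v0 :: "nat \<Rightarrow> real^'n" where ob0: "orthonormal_basis v0" using std_ob by blast
    define z where "z i = v0 (i mod ?n)" for i
    have zs: "\<forall>i<N. z i \<in> sphere 0 1" unfolding z_def using ob_norm[OF ob0] by simp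
    have ze: "is_empirical (map_pmf z (pmf_of_set {..<N})) N z" by (rule emp_exists[OF N])
    have "map_pmf z (pmf_of_set {..<N}) \<in> P_N_eq N" unfolding P_N_eq_def using zs ze by blast
    then have le: "E_inf (map_pmf z (pmf_of_set {..<N})) \<le> E_inf \<mu>" using mx unfolding maximizes_on_def by blast
    have PPz: "PP z {..<N} = TT ?n N" by (rule lemmaC[OF ob0]) (simp add: z_def)
    have "(real N ^ 2 - real (TT ?n N)) / (2 * real N ^ 2) \<le> (real N ^ 2 - real (PP x {..<N})) / (2 * real N ^ 2)"
      using le Eform[OF ze] Eform[OF xe] PPz by simp
    then have "real (PP x {..<N}) \<le> real (TT ?n N)" using Npos by (simp add: divide_le_cancel)
    then have PPx: "PP x {..<N} = TT ?n N" using lowerb[OF xs] by simp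
    have "\<exists>v g. orthonormal_basis v \<and> (\<forall>i\<in>{..<N}. g i < ?n \<and> (x i = v (g i) \<or> x i = - v (g i))) \<and>
       (\<forall>k<?n. \<forall>l<?n. card {i\<in>{..<N}. g i = k} \<le> card {i\<in>{..<N}. g i = l} + 1)"
      by (rule lemmaB) (use xs PPx in auto)
    then obtain v g where ob: "orthonormal_basis v"
      and gx: "\<forall>i\<in>{..<N}. g i < ?n \<and> (x i = v (g i) \<or> x i = - v (g i))"
      and bal: "\<forall>k<?n. \<forall>l<?n. card {i\<in>{..<N}. g i = k} \<le> card {i\<in>{..<N}. g i = l} + 1"
      by (elim exE conjE)
    obtain w \<sigma> where obw: "orthonormal_basis w" and \<sigma>: "bij_betw \<sigma> {..<N} {..<N}"
      and xw: "\<forall>i<N. x (\<sigma> i) = w (i mod ?n) \<or> x (\<sigma> i) = - w (i mod ?n)"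
      using relabel[OF ob gx bal] by (elim exE conjE)
    define y where "y i = x (\<sigma> i)" for i
    have ys: "\<forall>i<N. y i \<in> sphere 0 1"
    proof (intro allI impI)
      fix i assume "i < N"
      then have "\<sigma> i < N" using bij_betw_apply[OF \<sigma>] by simp
      then show "y i \<in> sphere 0 1" using xs y_def by simp
    qed
    have ye: "is_empirical \<mu> N y" unfolding is_empirical_def
    proof
      fix A
      have "(\<Sum>i<N. indicator A (y i) :: real) = (\<Sum>i<N. indicator A (x i))"
        unfolding y_def using sum.reindex_bij_betw[OF \<sigma>, of "\<lambda>i. indicator A (x i) :: real"] by simp
      then show "measure (measure_pmf \<mu>) A = 1 / real N * (\<Sum>i<N. indicator A (y i))"
        using xe unfolding is_empirical_def by simp
    qed
    have yw: "\<forall>i<N. y i \<in> {w (i mod ?n), - w (i mod ?n)}" using xw y_def by simp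
    show "\<exists>v x. orthonormal_basis v \<and> (\<forall>i<N. x i \<in> sphere 0 1) \<and> is_empirical \<mu> N x \<and>
        (\<forall>i<N. x i \<in> {v (i mod ?n), - v (i mod ?n)})"
      using obw ys ye yw by (intro exI[of _ w] exI[of _ y] conjI) simp_all
  next
    assume "\<exists>v x. orthonormal_basis v \<and> (\<forall>i<N. x i \<in> sphere 0 1) \<and> is_empirical \<mu> N x \<and>
        (\<forall>i<N. x i \<in> {v (i mod ?n), - v (i mod ?n)})"
    then obtain v x where ob: "orthonormal_basis v" and xs: "\<forall>i<N. x i \<in> sphere 0 1"
      and xe: "is_empirical \<mu> N x" and xv: "\<forall>i<N. x i \<in> {v (i mod ?n), - v (i mod ?n)}"
      by (elim exE conjE)
    have PPx: "PP x {..<N} = TT ?n N" by (rule lemmaC[OF ob]) (use xv in auto)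
    show "maximizes_on E_inf (P_N_eq N) \<mu>" unfolding maximizes_on_def
    proof (intro conjI ballI)
      show "\<mu> \<in> P_N_eq N" unfolding P_N_eq_def using xs xe by blast
    next
      fix \<nu> :: "(real^'n) pmf" assume "\<nu> \<in> P_N_eq N"
      then obtain y where ys: "\<forall>i<N. y i \<in> sphere 0 1" and ye: "is_empirical \<nu> N y"
        unfolding P_N_eq_def by blast
      have "TT ?n N \<le> PP y {..<N}" by (rule lowerb) (rule ys)
      then have "real (TT ?n N) \<le> real (PP y {..<N})" by simp
      then have "(real N ^ 2 - real (PP y {..<N})) / (2 * real N ^ 2) \<le> (real N ^ 2 - real (PP x {..<N})) / (2 * real N ^ 2)"
        using PPx Npos by (simp add: divide_right_mono)
      then show "E_inf \<nu> \<le> E_inf \<mu>" using Eform[OF ye] Eform[OF xe] by simp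
    qed
  qed
qed

lemma set_pmf_fin:
  fixes \<mu> :: "'a pmf" and J :: "'j set"
  assumes fin: "finite J" and m: "\<forall>A. measure (measure_pmf \<mu>) A = (\<Sum>j\<in>J. w j * indicator A (z j))"
  shows "set_pmf \<mu> \<subseteq> z ` J"
proof
  fix s assume s: "s \<in> set_pmf \<mu>"
  have pm: "pmf \<mu> s = (\<Sum>j\<in>J. w j * indicator {s} (z j))"
    using m[rule_format, of "{s}"] by (simp add: measure_pmf_single)
  show "s \<in> z ` J"
  proof (rule ccontr)
    assume ns: "s \<notin> z ` J"
    have "\<forall>j\<in>J. w j * indicator {s} (z j) = (0::real)" using ns by (auto simp: indicator_def)
    then have "(\<Sum>j\<in>J. w j * indicator {s} (z j)) = (0::real)" by (rule sum.neutral)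
    then have "pmf \<mu> s = 0" using pm by simp
    then show False using s by (simp add: pmf_eq_0_set_pmf)
  qed
qed

lemma pfin_measure:
  fixes \<mu> :: "'a pmf"
  assumes fin: "finite (set_pmf \<mu>)"
  shows "\<forall>A. measure (measure_pmf \<mu>) A = (\<Sum>s\<in>set_pmf \<mu>. pmf \<mu> s * indicator A s)"
proof
  fix A
  have "measure (measure_pmf \<mu>) A = measure (measure_pmf \<mu>) (set_pmf \<mu> \<inter> A)"
    using measure_Int_set_pmf[of \<mu> A] by (simp add: Int_commute)
  also have "\<dots> = sum (pmf \<mu>) (set_pmf \<mu> \<inter> A)" by (rule measure_measure_pmf_finite) (use fin in simp)
  also have "\<dots> = (\<Sum>s\<in>set_pmf \<mu>. if s \<in> A then pmf \<mu> s else 0)" by (rule sum.inter_restrict[OF fin])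
  also have "\<dots> = (\<Sum>s\<in>set_pmf \<mu>. pmf \<mu> s * indicator A s)" by (rule sum.cong) (auto simp: indicator_def)
  finally show "measure (measure_pmf \<mu>) A = (\<Sum>s\<in>set_pmf \<mu>. pmf \<mu> s * indicator A s)" .
qed

lemma pfin_E:
  fixes \<mu> :: "(real^'n) pmf"
  assumes fin: "finite (set_pmf \<mu>)"
  shows "E_inf \<mu> = 1/2 * (\<Sum>s\<in>set_pmf \<mu>. pmf \<mu> s * (\<Sum>t\<in>set_pmf \<mu>. pmf \<mu> t * Lambda_inf s t))"
  using E_fin[of "set_pmf \<mu>" \<mu> "pmf \<mu>" "\<lambda>s. s", OF fin] pfin_measure[OF fin] by simp

lemma part2_bound:
  fixes \<mu> :: "(real^'n) pmf"
  assumes P: "\<mu> \<in> P_fin"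
  shows "E_inf \<mu> \<le> 1/2 * (1 - 1 / real CARD('n))"
proof -
  define S where "S = set_pmf \<mu>"
  define p where "p = pmf \<mu>"
  have fin: "finite S" and sph: "S \<subseteq> sphere 0 1" using P unfolding P_fin_def S_def by auto
  have unit: "\<forall>s\<in>S. norm s = 1" using sph by auto
  have sum1: "(\<Sum>s\<in>S. p s) = 1" unfolding S_def p_def by (rule sum_pmf_eq_1) (use fin S_def in auto)
  have pnn: "0 \<le> p s" for s unfolding p_def by simp
  have fr: "(\<Sum>s\<in>S. p s * (\<Sum>t\<in>S. p t * Lambda_inf s t)) = 1 - 1 / real CARD('n)
     - (\<Sum>s\<in>S. p s * (\<Sum>t\<in>S. p t * (1 - (s \<bullet> t)\<^sup>2 - Lambda_inf s t)))
     - (\<Sum>k\<in>UNIV. \<Sum>l\<in>UNIV. ((\<Sum>s\<in>S. p s * (s$k * s$l)) - (if k = l then 1 / real CARD('n) else 0))\<^sup>2)"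
    by (rule frame_identity[OF fin unit sum1])
  have D1: "0 \<le> (\<Sum>s\<in>S. p s * (\<Sum>t\<in>S. p t * (1 - (s \<bullet> t)\<^sup>2 - Lambda_inf s t)))"
  proof (rule sum_nonneg)
    fix s assume s: "s \<in> S"
    have "0 \<le> (\<Sum>t\<in>S. p t * (1 - (s \<bullet> t)\<^sup>2 - Lambda_inf s t))"
    proof (rule sum_nonneg)
      fix t assume t: "t \<in> S"
      have "0 \<le> 1 - (s \<bullet> t)\<^sup>2 - Lambda_inf s t" using Lam_le[of s t] unit s t by simp
      then show "0 \<le> p t * (1 - (s \<bullet> t)\<^sup>2 - Lambda_inf s t)" using pnn by simp
    qed
    then show "0 \<le> p s * (\<Sum>t\<in>S. p t * (1 - (s \<bullet> t)\<^sup>2 - Lambda_inf s t))" using pnn by simp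
  qed
  have D2: "0 \<le> (\<Sum>k\<in>UNIV. \<Sum>l\<in>UNIV. ((\<Sum>s\<in>S. p s * (s$k * s$l)) - (if k = l then 1 / real CARD('n) else 0))\<^sup>2)"
    by (intro sum_nonneg) simp
  have "E_inf \<mu> = 1/2 * (\<Sum>s\<in>S. p s * (\<Sum>t\<in>S. p t * Lambda_inf s t))"
    unfolding S_def p_def by (rule pfin_E) (use fin S_def in simp)
  then show ?thesis using fr D1 D2 by simp
qed

lemma part2_std: "\<exists>\<nu> :: (real^'n) pmf. \<nu> \<in> P_fin \<and> E_inf \<nu> = 1/2 * (1 - 1 / real CARD('n))"
proof -
  let ?n = "CARD('n)"
  obtain e :: "nat \<Rightarrow> real^'n" where ob: "orthonormal_basis e" using std_ob by blast
  have n1: "?n \<ge> 1" by (simp add: Suc_leI)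
  define \<nu> where "\<nu> = map_pmf e (pmf_of_set {..<?n})"
  have emp: "is_empirical \<nu> ?n e" unfolding \<nu>_def by (rule emp_exists[OF n1])
  have PPe: "PP e {..<?n} = TT ?n ?n" by (rule lemmaC[OF ob]) simp
  have "TT ?n ?n = ?n" by (rule TT_small) simp
  then have "E_inf \<nu> = (real ?n ^ 2 - real ?n) / (2 * real ?n ^ 2)" using E_emp[OF emp] PPe by simp
  also have "\<dots> = 1/2 * (1 - 1 / real ?n)" using n1 by (simp add: field_simps power2_eq_square)
  finally have E: "E_inf \<nu> = 1/2 * (1 - 1 / real ?n)" .
  have ne: "{..<?n} \<noteq> {}" using n1 by (metis lessThan_empty_iff not_one_le_zero)
  have "set_pmf \<nu> = e ` {..<?n}" unfolding \<nu>_def using ne by simp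
  moreover have "e ` {..<?n} \<subseteq> sphere 0 1" using ob_norm[OF ob] by auto
  ultimately have "\<nu> \<in> P_fin" unfolding P_fin_def by simp
  then show ?thesis using E by blast
qed

lemma part2_conv:
  fixes \<mu> :: "(real^'n) pmf"
  assumes ob: "orthonormal_basis v"
    and ab: "\<forall>i<CARD('n). a i \<ge> (0::real) \<and> b i \<ge> 0 \<and> a i + b i = 1 / real CARD('n)"
    and m: "\<forall>A. measure (measure_pmf \<mu>) A = (\<Sum>i<CARD('n). a i * indicator A (v i) + b i * indicator A (- v i))"
  shows "\<mu> \<in> P_fin \<and> E_inf \<mu> = 1/2 * (1 - 1 / real CARD('n))"
proof -
  let ?n = "CARD('n)"
  define J where "J = {..<?n} \<times> (UNIV :: bool set)"
  define w where "w = (\<lambda>(i, c). if c then a i else b i)"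
  define z where "z = (\<lambda>(i, c). if c then v i else - v i)"
  have fJ: "finite J" by (simp add: J_def)
  have conv: "(\<Sum>j\<in>J. w j * f (z j)) = (\<Sum>i<?n. a i * f (v i) + b i * f (- v i))" for f :: "real^'n \<Rightarrow> real"
  proof -
    have "(\<Sum>j\<in>J. w j * f (z j)) = (\<Sum>i<?n. \<Sum>c\<in>(UNIV::bool set). w (i, c) * f (z (i, c)))"
      unfolding J_def by (subst sum.cartesian_product) (simp add: case_prod_unfold)
    also have "\<dots> = (\<Sum>i<?n. a i * f (v i) + b i * f (- v i))"
      by (rule sum.cong[OF refl]) (simp add: UNIV_bool w_def z_def)
    finally show ?thesis .
  qed
  have mJ: "\<forall>A. measure (measure_pmf \<mu>) A = (\<Sum>j\<in>J. w j * indicator A (z j))"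
    using m conv by simp
  have ex: "measure_pmf.expectation \<mu> f = (\<Sum>i<?n. a i * f (v i) + b i * f (- v i))" for f :: "real^'n \<Rightarrow> real"
    using expect_fin[OF fJ mJ, of f] conv by simp
  have sub: "set_pmf \<mu> \<subseteq> z ` J" by (rule set_pmf_fin[OF fJ mJ])
  have zs: "z ` J \<subseteq> sphere 0 1" unfolding J_def z_def using ob_norm[OF ob] by auto
  have P: "\<mu> \<in> P_fin" unfolding P_fin_def using sub zs fJ finite_subset by blast
  have lam: "Lambda_inf x y = (if i = i' then 0 else 1)"
    if i: "i < ?n" and i': "i' < ?n" and x: "x = v i \<or> x = - v i" and y: "y = v i' \<or> y = - v i'" for x y i i'
    using pm_inner_nz[OF ob i i' x y] unfolding Lambda_inf_def by auto
  have sumc: "(\<Sum>i'<?n. (if i = i' then 0 else c)) = (real ?n - 1) * c" if i: "i < ?n" for i and c :: real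
  proof -
    have "(\<Sum>i'<?n. (if i = i' then 0 else c)) = (\<Sum>i'<?n. c - (if i = i' then c else 0))"
      by (rule sum.cong) auto
    also have "\<dots> = real ?n * c - c" using i by (simp add: sum_subtractf)
    finally show ?thesis by (simp add: algebra_simps)
  qed
  have inner: "(\<Sum>i'<?n. a i' * Lambda_inf x (v i') + b i' * Lambda_inf x (- v i')) = 1 - 1 / real ?n"
    if i: "i < ?n" and x: "x = v i \<or> x = - v i" for x i
  proof -
    have "(\<Sum>i'<?n. a i' * Lambda_inf x (v i') + b i' * Lambda_inf x (- v i'))
        = (\<Sum>i'<?n. (if i = i' then 0 else 1 / real ?n))"
    proof (rule sum.cong[OF refl])
      fix i' assume "i' \<in> {..<?n}"
      then have i': "i' < ?n" by simp
      have "Lambda_inf x (v i') = (if i = i' then 0 else 1)" by (rule lam[OF i i' x]) simp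
      moreover have "Lambda_inf x (- v i') = (if i = i' then 0 else 1)" by (rule lam[OF i i' x]) simp
      ultimately show "a i' * Lambda_inf x (v i') + b i' * Lambda_inf x (- v i') = (if i = i' then 0 else 1 / real ?n)"
        using ab i' by (simp add: distrib_left[symmetric])
    qed
    also have "\<dots> = (real ?n - 1) * (1 / real ?n)" by (rule sumc[OF i])
    also have "\<dots> = 1 - 1 / real ?n" by (simp add: field_simps)
    finally show ?thesis .
  qed
  have "E_inf \<mu> = 1/2 * (\<Sum>i<?n. a i * (1 - 1 / real ?n) + b i * (1 - 1 / real ?n))"
    unfolding E_inf_def ex using inner by simp
  also have "\<dots> = 1/2 * (\<Sum>i<?n. (1 / real ?n) * (1 - 1 / real ?n))"
    using ab by (simp add: distrib_right[symmetric])
  also have "\<dots> = 1/2 * (1 - 1 / real ?n)" by simp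
  finally show ?thesis using P by simp
qed

lemma neg_ne:
  fixes x :: "real^'n"
  assumes "x \<noteq> 0"
  shows "x \<noteq> - x"
proof
  assume e: "x = - x"
  have "x \<bullet> x = x \<bullet> (- x)" by (subst e[symmetric]) (rule refl)
  then have "x \<bullet> x = 0" by simp
  then show False using assms by simp
qed

lemma nested_zero:
  fixes S :: "'a set" and p :: "'a \<Rightarrow> real"
  assumes fin: "finite S" and pos: "\<forall>s\<in>S. 0 < p s"
    and nn: "\<forall>s\<in>S. \<forall>t\<in>S. 0 \<le> Y s t"
    and z: "(\<Sum>s\<in>S. p s * (\<Sum>t\<in>S. p t * Y s t)) = 0"
  shows "\<forall>s\<in>S. \<forall>t\<in>S. Y s t = 0"
proof (intro ballI)
  fix s t assume s: "s \<in> S" and t: "t \<in> S"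
  have inn: "0 \<le> p t * Y s t" if "s \<in> S" "t \<in> S" for s t
    using pos nn that by (simp add: less_imp_le)
  have inner_nn: "0 \<le> (\<Sum>t\<in>S. p t * Y s t)" if "s \<in> S" for s
    by (rule sum_nonneg) (use inn that in blast)
  have outer_nn: "0 \<le> p s * (\<Sum>t\<in>S. p t * Y s t)" if "s \<in> S" for s
    using inner_nn[OF that] pos that by (simp add: less_imp_le)
  have "\<forall>s\<in>S. p s * (\<Sum>t\<in>S. p t * Y s t) = 0"
    using sum_nonneg_eq_0_iff[OF fin, of "\<lambda>s. p s * (\<Sum>t\<in>S. p t * Y s t)"] outer_nn z by blast
  then have "p s * (\<Sum>t\<in>S. p t * Y s t) = 0" using s by blast
  moreover have "p s \<noteq> 0" using pos s by force
  ultimately have "(\<Sum>t\<in>S. p t * Y s t) = 0" by simp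
  then have "\<forall>t\<in>S. p t * Y s t = 0"
    using sum_nonneg_eq_0_iff[OF fin, of "\<lambda>t. p t * Y s t"] inn[OF s] by blast
  then have "p t * Y s t = 0" using t by blast
  moreover have "p t \<noteq> 0" using pos t by force
  ultimately show "Y s t = 0" by simp
qed

lemma part2_char:
  fixes \<mu> :: "(real^'n) pmf"
  assumes P: "\<mu> \<in> P_fin" and E: "1/2 * (1 - 1 / real CARD('n)) \<le> E_inf \<mu>"
  shows "\<exists>v a b. orthonormal_basis v \<and>
           (\<forall>i<CARD('n). a i \<ge> (0::real) \<and> b i \<ge> 0 \<and> a i + b i = 1 / real CARD('n)) \<and>
           (\<forall>A. measure (measure_pmf \<mu>) A =
                (\<Sum>i<CARD('n). a i * indicator A (v i) + b i * indicator A (- v i)))"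
proof -
  let ?n = "CARD('n)"
  define S where "S = set_pmf \<mu>"
  define p where "p = pmf \<mu>"
  have fin: "finite S" and sph: "S \<subseteq> sphere 0 1" using P unfolding P_fin_def S_def by auto
  have unit: "\<forall>s\<in>S. norm s = 1" using sph by auto
  have nz: "\<And>s. s \<in> S \<Longrightarrow> s \<noteq> 0" using unit by auto
  have sum1: "(\<Sum>s\<in>S. p s) = 1" unfolding S_def p_def by (rule sum_pmf_eq_1) (use fin S_def in auto)
  have pos: "\<forall>s\<in>S. 0 < p s" unfolding S_def p_def by (simp add: pmf_positive)
  have pz: "p s = 0" if "s \<notin> S" for s using that unfolding S_def p_def by (simp add: pmf_eq_0_set_pmf)
  have meas: "\<forall>A. measure (measure_pmf \<mu>) A = (\<Sum>s\<in>S. p s * indicator A s)"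
    unfolding S_def p_def by (rule pfin_measure) (use fin S_def in simp)
  define M where "M = (\<lambda>k l. \<Sum>s\<in>S. p s * (s$k * s$l))"
  define D1 where "D1 = (\<Sum>s\<in>S. p s * (\<Sum>t\<in>S. p t * (1 - (s \<bullet> t)\<^sup>2 - Lambda_inf s t)))"
  define D2 where "D2 = (\<Sum>k\<in>UNIV. \<Sum>l\<in>UNIV. (M k l - (if k = l then 1 / real ?n else 0))\<^sup>2)"
  have fr: "(\<Sum>s\<in>S. p s * (\<Sum>t\<in>S. p t * Lambda_inf s t)) = 1 - 1 / real ?n - D1 - D2"
    unfolding D1_def D2_def M_def by (rule frame_identity[OF fin unit sum1])
  have Ynn: "\<forall>s\<in>S. \<forall>t\<in>S. 0 \<le> 1 - (s \<bullet> t)\<^sup>2 - Lambda_inf s t"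
    using Lam_le unit by fastforce
  have D1nn: "0 \<le> D1" unfolding D1_def
  proof (rule sum_nonneg)
    fix s assume s: "s \<in> S"
    have "0 \<le> (\<Sum>t\<in>S. p t * (1 - (s \<bullet> t)\<^sup>2 - Lambda_inf s t))"
      by (rule sum_nonneg) (use Ynn pos s in \<open>simp add: less_imp_le\<close>)
    then show "0 \<le> p s * (\<Sum>t\<in>S. p t * (1 - (s \<bullet> t)\<^sup>2 - Lambda_inf s t))" using pos s by (simp add: less_imp_le)
  qed
  have D2nn: "0 \<le> D2" unfolding D2_def by (intro sum_nonneg) simp
  have Eq: "E_inf \<mu> = 1/2 * (\<Sum>s\<in>S. p s * (\<Sum>t\<in>S. p t * Lambda_inf s t))"
    unfolding S_def p_def by (rule pfin_E) (use fin S_def in simp)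
  have "D1 + D2 \<le> 0" using E Eq fr by simp
  then have D1z: "D1 = 0" and D2z: "D2 = 0" using D1nn D2nn by linarith+
  have rel: "\<forall>s\<in>S. \<forall>t\<in>S. 1 - (s \<bullet> t)\<^sup>2 - Lambda_inf s t = 0"
    by (rule nested_zero[OF fin pos Ynn]) (use D1z D1_def in simp)
  have Mz: "M k l = (if k = l then 1 / real ?n else 0)" for k l
  proof -
    have a: "\<forall>k\<in>UNIV. (\<Sum>l\<in>UNIV. (M k l - (if k = l then 1 / real ?n else 0))\<^sup>2) = 0"
      using sum_nonneg_eq_0_iff[of UNIV "\<lambda>k. (\<Sum>l\<in>UNIV. (M k l - (if k = l then 1 / real ?n else 0))\<^sup>2)"]
        D2z unfolding D2_def by (simp add: sum_nonneg)
    then have "\<forall>l\<in>UNIV. (M k l - (if k = l then 1 / real ?n else 0))\<^sup>2 = 0"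
      using sum_nonneg_eq_0_iff[of UNIV "\<lambda>l. (M k l - (if k = l then 1 / real ?n else 0))\<^sup>2"] by simp
    then show ?thesis by simp
  qed
  have pm: "s = t \<or> s = - t" if s: "s \<in> S" and t: "t \<in> S" and st: "s \<bullet> t \<noteq> 0" for s t
  proof -
    have "Lambda_inf s t = 0" using st by (simp add: Lambda_inf_def)
    then have "(s \<bullet> t)\<^sup>2 = 1" using rel s t by force
    then show ?thesis using unit_sq unit s t by blast
  qed
  have sqind: "(s \<bullet> u)\<^sup>2 = indicator {u, - u} s" if s: "s \<in> S" and u: "u \<in> S" for s u
  proof (cases "s \<bullet> u = 0")
    case True
    have uu: "u \<bullet> u = 1" using unit u by (simp add: dot_square_norm)
    then have "s \<noteq> u" "s \<noteq> - u" using True by auto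
    then show ?thesis using True by (simp add: indicator_def)
  next
    case False
    then have "s = u \<or> s = - u" using pm s u by blast
    moreover have uu: "u \<bullet> u = 1" using unit u by (simp add: dot_square_norm)
    ultimately show ?thesis by (auto simp: indicator_def)
  qed
  have Wu: "p u + p (- u) = 1 / real ?n" if u: "u \<in> S" for u
  proof -
    have "(\<Sum>s\<in>S. p s * (s \<bullet> u)\<^sup>2) = (\<Sum>k\<in>UNIV. \<Sum>l\<in>UNIV. u$k * u$l * M k l)"
      unfolding M_def by (rule W_eq[OF fin])
    also have "\<dots> = (\<Sum>k\<in>UNIV. u$k * u$k / real ?n)"
      unfolding Mz by (simp add: if_distrib cong: if_cong)
    also have "\<dots> = (u \<bullet> u) / real ?n" by (simp add: inner_vec_def sum_divide_distrib)
    also have "\<dots> = 1 / real ?n" using unit u by (simp add: dot_square_norm)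
    finally have W: "(\<Sum>s\<in>S. p s * (s \<bullet> u)\<^sup>2) = 1 / real ?n" .
    have "(\<Sum>s\<in>S. p s * (s \<bullet> u)\<^sup>2) = (\<Sum>s\<in>S. p s * indicator {u, - u} s)"
      by (rule sum.cong[OF refl]) (use sqind u in simp)
    also have "\<dots> = measure (measure_pmf \<mu>) {u, - u}" using meas by simp
    also have "\<dots> = sum (pmf \<mu>) {u, - u}" by (rule measure_measure_pmf_finite) simp
    also have "\<dots> = p u + p (- u)" using neg_ne[OF nz[OF u]] unfolding p_def
      by (subst sum.insert) auto
    finally show ?thesis using W by simp
  qed
  obtain R where RS: "R \<subseteq> S" and oR: "\<And>a b. a \<in> R \<Longrightarrow> b \<in> R \<Longrightarrow> a \<noteq> b \<Longrightarrow> a \<bullet> b = 0"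
    and cov: "\<And>s. s \<in> S \<Longrightarrow> \<exists>r\<in>R. s \<bullet> r \<noteq> 0"
  proof -
    obtain R where "R \<subseteq> S" "\<And>a b. a \<in> R \<Longrightarrow> b \<in> R \<Longrightarrow> a \<noteq> b \<Longrightarrow> id a \<bullet> id b = 0"
      "\<And>s. s \<in> S \<Longrightarrow> \<exists>r\<in>R. id s \<bullet> id r \<noteq> 0"
      by (rule max_orth[OF fin, of id]) (use nz in simp_all)
    then show ?thesis using that by simp
  qed
  have fR: "finite R" using RS fin finite_subset by blast
  define V where "V = (\<Union>r\<in>R. {r, - r})"
  have SV: "S \<subseteq> V"
  proof
    fix s assume s: "s \<in> S"
    then obtain r where r: "r \<in> R" "s \<bullet> r \<noteq> 0" using cov by blast
    then have "s = r \<or> s = - r" using pm s RS by blast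
    then show "s \<in> V" using r unfolding V_def by blast
  qed
  have fV: "finite V" unfolding V_def using fR by simp
  have disj: "\<forall>r1\<in>R. \<forall>r2\<in>R. r1 \<noteq> r2 \<longrightarrow> {r1, - r1} \<inter> {r2, - r2} = {}"
  proof (intro ballI impI)
    fix r1 r2 assume r1: "r1 \<in> R" and r2: "r2 \<in> R" and ne: "r1 \<noteq> r2"
    have o: "r1 \<bullet> r2 = 0" using oR r1 r2 ne by blast
    have u1: "r1 \<bullet> r1 = 1" using unit RS r1 by (auto simp: dot_square_norm)
    have "r1 \<noteq> - r2" using o u1 by auto
    moreover have "- r1 \<noteq> r2" using o u1 by auto
    moreover have "- r1 \<noteq> - r2" using ne by simp
    ultimately show "{r1, - r1} \<inter> {r2, - r2} = {}" using ne by auto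
  qed
  have sumV: "(\<Sum>s\<in>V. f s) = (\<Sum>r\<in>R. f r + f (- r))" for f :: "real^'n \<Rightarrow> real"
  proof -
    have "(\<Sum>s\<in>V. f s) = (\<Sum>r\<in>R. sum f {r, - r})"
      unfolding V_def by (rule sum.UNION_disjoint[OF fR]) (use disj in auto)
    also have "\<dots> = (\<Sum>r\<in>R. f r + f (- r))"
    proof (rule sum.cong[OF refl])
      fix r assume "r \<in> R"
      then have "r \<noteq> - r" using neg_ne nz RS by blast
      then show "sum f {r, - r} = f r + f (- r)" by simp
    qed
    finally show ?thesis .
  qed
  have "1 = (\<Sum>s\<in>S. p s)" using sum1 by simp
  also have "\<dots> = (\<Sum>s\<in>V. p s)" by (rule sum.mono_neutral_left[OF fV SV]) (use pz in auto)
  also have "\<dots> = (\<Sum>r\<in>R. p r + p (- r))" by (rule sumV)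
  also have "\<dots> = (\<Sum>r\<in>R. 1 / real ?n)" by (rule sum.cong[OF refl]) (use Wu RS in auto)
  also have "\<dots> = real (card R) / real ?n" by simp
  finally have "real (card R) = real ?n" by (simp add: field_simps)
  then have cR: "card R = ?n" by simp
  obtain v where bv: "bij_betw v {0..<card R} R" using ex_bij_betw_nat_finite[OF fR] by blast
  then have bv': "bij_betw v {..<?n} R" using cR by (simp add: atLeast0LessThan)
  have ob: "orthonormal_basis v"
    by (rule ob_of_set[OF bv']) (use oR unit RS in auto)
  have vR: "v i \<in> R" if "i < ?n" for i using bij_betw_apply[OF bv'] that by simp
  define a where "a i = p (v i)" for i
  define b where "b i = p (- v i)" for i
  have ab: "\<forall>i<?n. a i \<ge> 0 \<and> b i \<ge> 0 \<and> a i + b i = 1 / real ?n"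
    unfolding a_def b_def p_def using Wu vR RS unfolding p_def by auto
  have mform: "\<forall>A. measure (measure_pmf \<mu>) A = (\<Sum>i<?n. a i * indicator A (v i) + b i * indicator A (- v i))"
  proof
    fix A
    have "measure (measure_pmf \<mu>) A = (\<Sum>s\<in>S. p s * indicator A s)" using meas by simp
    also have "\<dots> = (\<Sum>s\<in>V. p s * indicator A s)" by (rule sum.mono_neutral_left[OF fV SV]) (use pz in auto)
    also have "\<dots> = (\<Sum>r\<in>R. p r * indicator A r + p (- r) * indicator A (- r))" by (rule sumV)
    also have "\<dots> = (\<Sum>i<?n. p (v i) * indicator A (v i) + p (- v i) * indicator A (- v i))"
      using sum.reindex_bij_betw[OF bv', of "\<lambda>r. p r * indicator A r + p (- r) * indicator A (- r)"] by simp
    finally show "measure (measure_pmf \<mu>) A = (\<Sum>i<?n. a i * indicator A (v i) + b i * indicator A (- v i))"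
      unfolding a_def b_def .
  qed
  show ?thesis using ob ab mform by (intro exI[of _ v] exI[of _ a] exI[of _ b] conjI) simp_all
qed

theorem theorem1p4:
  assumes "CARD('n::finite) \<ge> 2"
  shows "(\<forall>N::nat. N \<ge> 1 \<longrightarrow> (\<forall>\<mu> :: (real^'n) pmf.
            maximizes_on E_inf (P_N_eq N) \<mu> \<longleftrightarrow>
            (\<exists>v x. orthonormal_basis v \<and> (\<forall>i<N. x i \<in> sphere 0 1) \<and>
                   is_empirical \<mu> N x \<and>
                   (\<forall>i<N. x i \<in> {v (i mod CARD('n)), - v (i mod CARD('n))}))))
       \<and> (\<forall>\<mu> :: (real^'n) pmf.
            maximizes_on E_inf P_fin \<mu> \<longleftrightarrow>
            (\<exists>v a b. orthonormal_basis v \<and>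
               (\<forall>i<CARD('n). a i \<ge> (0::real) \<and> b i \<ge> 0 \<and> a i + b i = 1 / real CARD('n)) \<and>
               (\<forall>A. measure (measure_pmf \<mu>) A =
                    (\<Sum>i<CARD('n). a i * indicator A (v i) + b i * indicator A (- v i)))))"
proof -
  have p1: "\<forall>N::nat. N \<ge> 1 \<longrightarrow> (\<forall>\<mu> :: (real^'n) pmf.
            maximizes_on E_inf (P_N_eq N) \<mu> \<longleftrightarrow>
            (\<exists>v x. orthonormal_basis v \<and> (\<forall>i<N. x i \<in> sphere 0 1) \<and>
                   is_empirical \<mu> N x \<and>
                   (\<forall>i<N. x i \<in> {v (i mod CARD('n)), - v (i mod CARD('n))})))"
    by (intro allI impI) (rule part1)
  have p2: "\<forall>\<mu> :: (real^'n) pmf.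
            maximizes_on E_inf P_fin \<mu> \<longleftrightarrow>
            (\<exists>v a b. orthonormal_basis v \<and>
               (\<forall>i<CARD('n). a i \<ge> (0::real) \<and> b i \<ge> 0 \<and> a i + b i = 1 / real CARD('n)) \<and>
               (\<forall>A. measure (measure_pmf \<mu>) A =
                    (\<Sum>i<CARD('n). a i * indicator A (v i) + b i * indicator A (- v i))))"
  proof (intro allI iffI)
    fix \<mu> :: "(real^'n) pmf"
    assume mx: "maximizes_on E_inf P_fin \<mu>"
    then have P: "\<mu> \<in> P_fin" unfolding maximizes_on_def by blast
    obtain \<nu> :: "(real^'n) pmf" where \<nu>: "\<nu> \<in> P_fin" and E\<nu>: "E_inf \<nu> = 1/2 * (1 - 1 / real CARD('n))"
      using part2_std by blast
    have "E_inf \<nu> \<le> E_inf \<mu>" using mx \<nu> unfolding maximizes_on_def by blast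
    then have "1/2 * (1 - 1 / real CARD('n)) \<le> E_inf \<mu>" using E\<nu> by simp
    then show "\<exists>v a b. orthonormal_basis v \<and>
               (\<forall>i<CARD('n). a i \<ge> (0::real) \<and> b i \<ge> 0 \<and> a i + b i = 1 / real CARD('n)) \<and>
               (\<forall>A. measure (measure_pmf \<mu>) A =
                    (\<Sum>i<CARD('n). a i * indicator A (v i) + b i * indicator A (- v i)))"
      by (rule part2_char[OF P])
  next
    fix \<mu> :: "(real^'n) pmf"
    assume "\<exists>v a b. orthonormal_basis v \<and>
               (\<forall>i<CARD('n). a i \<ge> (0::real) \<and> b i \<ge> 0 \<and> a i + b i = 1 / real CARD('n)) \<and>
               (\<forall>A. measure (measure_pmf \<mu>) A =
                    (\<Sum>i<CARD('n). a i * indicator A (v i) + b i * indicator A (- v i)))"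
    then obtain v a b where ob: "orthonormal_basis v"
      and ab: "\<forall>i<CARD('n). a i \<ge> (0::real) \<and> b i \<ge> 0 \<and> a i + b i = 1 / real CARD('n)"
      and m: "\<forall>A. measure (measure_pmf \<mu>) A =
                    (\<Sum>i<CARD('n). a i * indicator A (v i) + b i * indicator A (- v i))"
      by (elim exE conjE)
    have c: "\<mu> \<in> P_fin \<and> E_inf \<mu> = 1/2 * (1 - 1 / real CARD('n))" by (rule part2_conv[OF ob ab m])
    show "maximizes_on E_inf P_fin \<mu>" unfolding maximizes_on_def
    proof (intro conjI ballI)
      show "\<mu> \<in> P_fin" using c by blast
    next
      fix \<nu> :: "(real^'n) pmf" assume "\<nu> \<in> P_fin"
      then have "E_inf \<nu> \<le> 1/2 * (1 - 1 / real CARD('n))" by (rule part2_bound)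
      then show "E_inf \<nu> \<le> E_inf \<mu>" using c by simp
    qed
  qed
  show ?thesis using p1 p2 by (intro conjI)
qed

end
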